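(* Consider the multi-agent system $\dot x_i(t)=u_i(t)$, $t\geqslant 0$, $i=1,\dots,N$, $x_i\in\mathbb{R}$, with sampled control input, for $t\in[t_k,t_{k+1})$, $$u_i(t)=\begin{cases}0, & t_k\in\Xi(0,+\infty),\\ \sum_{j=1}^N a_{ij}(x_j(t_k)-x_i(t_k)), & t_k\in\Theta(0,+\infty),\end{cases}$$ where the Laplacian $\mathscr{L}$ is symmetric and irreducible, and $\xi$ is a DoS sequence that is not an edge case. Let $t_1=0$ and $t_{k+1}=t_k+\Delta_k$, where $\Delta_k=\Delta_0$ if $t_k\in[0,h_1+\tau_1)$, with $\Delta_0>0$ satisfying $\lvert 1-\Delta_0\lambda_N(\mathscr{L})\rvert<1$, and $$\Delta_k=\min\left\{\Delta_0,\ \frac{1-\hat B_d(h_n+\tau_n)}{\gamma_1\hat B_f(h_n)}\right\}\quad\text{if } t_k\in[h_n+\tau_n,h_{n+1}+\tau_{n+1}),\ n\in\mathbb{N}_+,$$ with a constant $\gamma_1>1$, where $\hat B_d,\hat B_f$ are generated by the DoS estimator (with any parameters $2\leqslant\ell\in\mathbb{N}_+$, $0<\epsilon_0<1$, $0<\theta<1$). Then the system reaches average consensus, i.e. $\lim_{t\to+\infty}\big(x_i(t)-\frac1N\sum_{j=1}^N x_j(0)\big)=0$ for all $i$, and there exists a constant $\underline{\Delta}>0$ with $\Delta_k\geqslant\underline{\Delta}$ for all $k$.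
   Context: A DoS sequence $\xi=\{H_n\}$ is a finite or infinite sequence of sets $H_n := \{h_n\}\cup[h_n,h_n+\tau_n)$, where $h_1\geqslant 0$, $\tau_n\geqslant 0$ and $h_{n+1} > h_n+\tau_n$ for all $n$. If $\xi$ has only $m$ elements, the convention $h_{n}=h_{n}+\tau_{n}=+\infty$ for $n>m$ is used. For $0\leqslant \tau\leqslant s$ let $\Xi(\tau,s) := \bigcup_n H_n\cap[\tau,s]$ (times under attack, where transmissions fail), $\Theta(\tau,s):=[\tau,s]\setminus\Xi(\tau,s)$, and $n_\xi(\tau,s) := \operatorname{card}(\{h_n\}_n\cap[\tau,s])$; $\lvert\cdot\rvert$ denotes Lebesgue measure; $\Xi(0,+\infty)=\bigcup_n H_n$, $\Theta(0,+\infty)=[0,+\infty)\setminus\Xi(0,+\infty)$. A constant $B_d\in[0,1]$ is a duration-bound of $\xi$ if there is $0<\kappa<+\infty$ with $\lvert \Xi(0,t)\rvert\leqslant \kappa + B_d t$ for all $t\geqslant 0$. A constant $B_f\in[0,+\infty)$ is a frequency-bound of $\xi$ if there is an integer $0<\Lambda<+\infty$ with $n_\xi(0,t)\leqslant \Lambda + B_f t$ for all $t\geqslant 0$; if no such finite $B_f$ exists, the frequency-bound is $+\infty$. $\mathcal{D}(\xi)$, $\mathcal{F}(\xi)$ are the sets of duration- and frequency-bounds. $\xi$ is an edge case if (i) $\inf\mathcal{D}(\xi)=1$, or (ii) $\inf\mathcal{F}(\xi)=+\infty$, or (iii) for every $\Gamma>0$ there is $n$ with $\tau_n>\Gamma$.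 DoS estimator: with $B_d(i) := \frac{\lvert \Xi(0,h_i+\tau_i)\rvert}{h_i+\tau_i}$ and $B_f(i) := \frac{i}{h_i}$, $\hat B_d(t) = \epsilon_0$ for $t\in[0,h_\ell+\tau_\ell)$, $\hat B_d(t) = \max_{\ell\leqslant i\leqslant n}\{\epsilon_0,\ \theta B_d(i)+(1-\theta)\}$ for $t\in[h_n+\tau_n, h_{n+1}+\tau_{n+1})$, $n\geqslant \ell$; $\hat B_f(t) = \epsilon_0$ for $t\in[0,h_\ell)$, $\hat B_f(t) = \max_{\ell\leqslant i\leqslant n}\{\epsilon_0,\ B_f(i)/\theta\}$ for $t\in[h_n,h_{n+1})$, $n\geqslant\ell$. Network: $a_{ij}\in\{0,1\}$, $a_{ij}=1$ iff agents $i,j$ are connected; Laplacian $\mathscr{L}=(l_{ij})$ with $l_{ij}=-a_{ij}$ ($i\neq j$), $l_{ii}=\sum_{j\neq i}a_{ij}$. Under symmetry and irreducibility its eigenvalues are $0=\lambda_1(\mathscr{L})<\lambda_2(\mathscr{L})\leqslant\cdots\leqslant\lambda_N(\mathscr{L})$. *)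

theory Defs
  imports "HOL-Analysis.Analysis" "HOL-Library.Extended_Nat" "HOL-Library.Extended_Real"
begin

text \<open>A DoS sequence is given by a number of attacks M (possibly infinite) and
  reals h n, tau n for the valid indices 1 \<le> n \<le> M. Values at other indices are
  irrelevant (they correspond to the convention h n = +\<infinity>).\<close>

definition dos_idx :: "enat \<Rightarrow> nat \<Rightarrow> bool" where
  "dos_idx M n \<longleftrightarrow> 1 \<le> n \<and> enat n \<le> M"

definition dos_seq :: "enat \<Rightarrow> (nat \<Rightarrow> real) \<Rightarrow> (nat \<Rightarrow> real) \<Rightarrow> bool" where
  "dos_seq M h tau \<longleftrightarrow>
     (dos_idx M 1 \<longrightarrow> 0 \<le> h 1) \<and>
     (\<forall>n. dos_idx M n \<longrightarrow> 0 \<le> tau n) \<and>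
     (\<forall>n. dos_idx M n \<and> dos_idx M (Suc n) \<longrightarrow> h n + tau n < h (Suc n))"

definition dos_attack_set :: "enat \<Rightarrow> (nat \<Rightarrow> real) \<Rightarrow> (nat \<Rightarrow> real) \<Rightarrow> real set" where
  "dos_attack_set M h tau = (\<Union>n\<in>{n. dos_idx M n}. {h n} \<union> {h n ..< h n + tau n})"

definition XiI :: "enat \<Rightarrow> (nat \<Rightarrow> real) \<Rightarrow> (nat \<Rightarrow> real) \<Rightarrow> real \<Rightarrow> real \<Rightarrow> real set" where
  "XiI M h tau a b = dos_attack_set M h tau \<inter> {a..b}"

definition dos_starts :: "enat \<Rightarrow> (nat \<Rightarrow> real) \<Rightarrow> real \<Rightarrow> real \<Rightarrow> real set" where
  "dos_starts M h a b = {h n | n. dos_idx M n} \<inter> {a..b}"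

definition duration_bounds :: "enat \<Rightarrow> (nat \<Rightarrow> real) \<Rightarrow> (nat \<Rightarrow> real) \<Rightarrow> real set" where
  "duration_bounds M h tau = {B. 0 \<le> B \<and> B \<le> 1 \<and>
     (\<exists>\<kappa>>0. \<forall>t\<ge>0. measure lborel (XiI M h tau 0 t) \<le> \<kappa> + B * t)}"

text \<open>n_xi(0,t) \<le> \<Lambda> + B t, where n_xi(0,t) is required to be finite (an infinite
  cardinality is never bounded by a real number).\<close>
definition frequency_bounds :: "enat \<Rightarrow> (nat \<Rightarrow> real) \<Rightarrow> real set" where
  "frequency_bounds M h = {B. 0 \<le> B \<and>
     (\<exists>\<Lambda>::nat. 0 < \<Lambda> \<and> (\<forall>t\<ge>0. finite (dos_starts M h 0 t) \<and>
        real (card (dos_starts M h 0 t)) \<le> real \<Lambda> + B * t))}"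

definition edge_case :: "enat \<Rightarrow> (nat \<Rightarrow> real) \<Rightarrow> (nat \<Rightarrow> real) \<Rightarrow> bool" where
  "edge_case M h tau \<longleftrightarrow>
     Inf (duration_bounds M h tau) = 1 \<or>
     (INF B\<in>frequency_bounds M h. ereal B) = \<infinity> \<or>
     (\<forall>\<Gamma>>0. \<exists>n. dos_idx M n \<and> tau n > \<Gamma>)"

definition Bd_i :: "enat \<Rightarrow> (nat \<Rightarrow> real) \<Rightarrow> (nat \<Rightarrow> real) \<Rightarrow> nat \<Rightarrow> real" where
  "Bd_i M h tau i = measure lborel (XiI M h tau 0 (h i + tau i)) / (h i + tau i)"

definition Bf_i :: "(nat \<Rightarrow> real) \<Rightarrow> nat \<Rightarrow> real" where
  "Bf_i h i = real i / h i"

text \<open>t \<in> [h_n + tau_n, h_(n+1) + tau_(n+1)) (with the convention h_(n+1) = +\<infinity> if n = M).\<close>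
definition phase_d :: "enat \<Rightarrow> (nat \<Rightarrow> real) \<Rightarrow> (nat \<Rightarrow> real) \<Rightarrow> nat \<Rightarrow> real \<Rightarrow> bool" where
  "phase_d M h tau n t \<longleftrightarrow> dos_idx M n \<and> h n + tau n \<le> t \<and>
     (dos_idx M (Suc n) \<longrightarrow> t < h (Suc n) + tau (Suc n))"

definition phase_f :: "enat \<Rightarrow> (nat \<Rightarrow> real) \<Rightarrow> nat \<Rightarrow> real \<Rightarrow> bool" where
  "phase_f M h n t \<longleftrightarrow> dos_idx M n \<and> h n \<le> t \<and>
     (dos_idx M (Suc n) \<longrightarrow> t < h (Suc n))"

definition Bd_hat :: "enat \<Rightarrow> (nat \<Rightarrow> real) \<Rightarrow> (nat \<Rightarrow> real) \<Rightarrow> nat \<Rightarrow> real \<Rightarrow> real \<Rightarrow> real \<Rightarrow> real" where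
  "Bd_hat M h tau ell \<epsilon>0 \<theta> t =
     (if \<exists>n. ell \<le> n \<and> phase_d M h tau n t
      then Max ({\<epsilon>0} \<union> (\<lambda>i. \<theta> * Bd_i M h tau i + (1 - \<theta>)) ` {ell..(THE n. ell \<le> n \<and> phase_d M h tau n t)})
      else \<epsilon>0)"

definition Bf_hat :: "enat \<Rightarrow> (nat \<Rightarrow> real) \<Rightarrow> nat \<Rightarrow> real \<Rightarrow> real \<Rightarrow> real \<Rightarrow> real" where
  "Bf_hat M h ell \<epsilon>0 \<theta> t =
     (if \<exists>n. ell \<le> n \<and> phase_f M h n t
      then Max ({\<epsilon>0} \<union> (\<lambda>i. Bf_i h i / \<theta>) ` {ell..(THE n. ell \<le> n \<and> phase_f M h n t)})
      else \<epsilon>0)"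

text \<open>Sampling interval Delta_k as a function of the sampling time t_k.\<close>
definition sample_step :: "enat \<Rightarrow> (nat \<Rightarrow> real) \<Rightarrow> (nat \<Rightarrow> real) \<Rightarrow> nat \<Rightarrow> real \<Rightarrow> real
    \<Rightarrow> real \<Rightarrow> real \<Rightarrow> real \<Rightarrow> real" where
  "sample_step M h tau ell \<epsilon>0 \<theta> \<Delta>0 \<gamma>1 t =
     (if \<exists>n. phase_d M h tau n t
      then (let n = (THE n. phase_d M h tau n t) in
            min \<Delta>0 ((1 - Bd_hat M h tau ell \<epsilon>0 \<theta> (h n + tau n)) / (\<gamma>1 * Bf_hat M h ell \<epsilon>0 \<theta> (h n))))
      else \<Delta>0)"

definition laplacian :: "('n::finite \<Rightarrow> 'n \<Rightarrow> real) \<Rightarrow> real^'n^'n" where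
  "laplacian a = (\<chi> i j. if i = j then (\<Sum>k\<in>UNIV - {i}. a i k) else - a i j)"

text \<open>Irreducible matrix: no simultaneous permutation of rows/columns brings it to
  block triangular form, i.e. no nonempty proper index set S with L_ij = 0 for all
  i in S, j not in S.\<close>
definition irreducible_mat :: "real^'n^'n \<Rightarrow> bool" where
  "irreducible_mat L \<longleftrightarrow>
     (\<forall>S::'n set. S \<noteq> {} \<and> S \<noteq> UNIV \<longrightarrow> (\<exists>i\<in>S. \<exists>j. j \<notin> S \<and> L $ i $ j \<noteq> 0))"

definition lambda_max :: "real^'n^'n \<Rightarrow> real" where
  "lambda_max L = Max {mu. \<exists>v. v \<noteq> 0 \<and> L *v v = mu *\<^sub>R v}"

end

theory Submission
  imports Defs
begin


lemma selfadj:
  fixes L :: "real^'n^'n"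
  assumes "transpose L = L"
  shows "(L *v v) \<bullet> w = v \<bullet> (L *v w)"
proof -
  have "v \<bullet> (L *v w) = (v v* L) \<bullet> w" by (simp add: dot_lmul_matrix)
  also have "v v* L = L *v v" using vector_transpose_matrix[of v L] assms by simp
  finally show ?thesis by simp
qed

lemma eig_finite:
  fixes L :: "real^'n^'n"
  assumes "transpose L = L"
  shows "finite {mu. \<exists>v. v \<noteq> 0 \<and> L *v v = mu *\<^sub>R v}"
proof -
  let ?E = "{mu. \<exists>v. v \<noteq> 0 \<and> L *v v = mu *\<^sub>R v}"
  define f where "f mu = (SOME v. v \<noteq> 0 \<and> L *v v = mu *\<^sub>R v)" for mu
  have f: "f mu \<noteq> 0 \<and> L *v f mu = mu *\<^sub>R f mu" if "mu \<in> ?E" for mu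
    using that unfolding f_def by (metis (mono_tags, lifting) mem_Collect_eq someI_ex)
  have inj: "inj_on f ?E"
  proof (rule inj_onI)
    fix m1 m2 assume a: "m1 \<in> ?E" "m2 \<in> ?E" "f m1 = f m2"
    have "m1 *\<^sub>R f m1 = L *v f m1" using f[OF a(1)] by simp
    also have "\<dots> = L *v f m2" using a(3) by simp
    also have "\<dots> = m2 *\<^sub>R f m2" using f[OF a(2)] by simp
    finally have "m1 *\<^sub>R f m1 = m2 *\<^sub>R f m1" using a(3) by simp
    then have "(m1 - m2) *\<^sub>R f m1 = 0" by (simp add: algebra_simps)
    then show "m1 = m2" using f[OF a(1)] by simp
  qed
  have orth: "pairwise orthogonal (f ` ?E)"
    unfolding pairwise_def orthogonal_def
  proof (intro ballI impI)
    fix u w assume "u \<in> f ` ?E" "w \<in> f ` ?E" "u \<noteq> w"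
    then obtain m1 m2 where a: "m1 \<in> ?E" "m2 \<in> ?E" "u = f m1" "w = f m2" by blast
    then have "m1 \<noteq> m2" using \<open>u \<noteq> w\<close> by blast
    have "(L *v f m1) \<bullet> f m2 = f m1 \<bullet> (L *v f m2)" by (rule selfadj[OF assms])
    then have "m1 * (f m1 \<bullet> f m2) = m2 * (f m1 \<bullet> f m2)"
      using f[OF a(1)] f[OF a(2)] by simp
    then have "(m1 - m2) * (f m1 \<bullet> f m2) = 0" by (simp add: algebra_simps)
    then show "u \<bullet> w = 0" using \<open>m1 \<noteq> m2\<close> a by simp
  qed
  have "0 \<notin> f ` ?E" using f by force
  then have "independent (f ` ?E)" using pairwise_orthogonal_independent orth by blast
  then have "finite (f ` ?E)" using independent_bound by blast
  then show ?thesis using finite_imageD inj by blast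
qed

lemma psd_kernel:
  fixes g :: "real^'n \<Rightarrow> real^'n"
  assumes add: "\<And>u w. g (u + w) = g u + g w" and scl: "\<And>c u. g (c *\<^sub>R u) = c *\<^sub>R g u"
    and sa: "\<And>u w. g u \<bullet> w = u \<bullet> g w"
    and psd: "\<And>z. 0 \<le> z \<bullet> g z" and v0: "v \<bullet> g v = 0"
  shows "g v = 0"
proof (rule ccontr)
  assume ne: "g v \<noteq> 0"
  define y where "y = g v"
  define s where "s = y \<bullet> y"
  define q where "q = y \<bullet> g y"
  have s: "s > 0" using ne by (simp add: s_def y_def)
  have q: "q \<ge> 0" using psd by (simp add: q_def)
  define e where "e = - s / (q + s)"
  have "0 \<le> (v + e *\<^sub>R y) \<bullet> g (v + e *\<^sub>R y)" by (rule psd)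
  also have "\<dots> = v \<bullet> g v + e * (v \<bullet> g y) + e * (y \<bullet> g v) + e * e * q"
    by (simp add: add scl inner_add_left inner_add_right q_def algebra_simps)
  also have "v \<bullet> g y = y \<bullet> y"
    using sa[of v y] by (simp add: y_def inner_commute)
  also have "y \<bullet> g v = y \<bullet> y" by (simp add: y_def)
  finally have "0 \<le> 2 * e * s + e * e * q" using v0 by (simp add: s_def)
  moreover have "q + s > 0" using s q by simp
  then have "e < 0" using s by (simp add: e_def)
  moreover have "e * q \<ge> - s"
  proof -
    have "e * q = - (s * q) / (q + s)" by (simp add: e_def)
    moreover have "s * q / (q + s) \<le> s" using s q \<open>q + s > 0\<close>
      by (simp add: divide_le_eq mult_left_mono)
    ultimately show ?thesis by simp
  qed
  moreover have "2 * e * s + e * e * q = e * (2 * s + e * q)" by (simp add: algebra_simps)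
  moreover have "e * (2 * s + e * q) < 0" using calculation s by (intro mult_neg_pos) auto
  ultimately show False by linarith
qed

lemma lam_max_facts:
  fixes L :: "real^'n^'n"
  assumes sym: "transpose L = L" and ne: "\<exists>v. v \<noteq> 0 \<and> L *v v = mu0 *\<^sub>R v"
  shows "\<exists>v. v \<noteq> 0 \<and> L *v v = lambda_max L *\<^sub>R v"
    and "\<And>mu v. v \<noteq> 0 \<Longrightarrow> L *v v = mu *\<^sub>R v \<Longrightarrow> mu \<le> lambda_max L"
proof -
  let ?E = "{mu. \<exists>v. v \<noteq> 0 \<and> L *v v = mu *\<^sub>R v}"
  have fin: "finite ?E" by (rule eig_finite[OF sym])
  have "mu0 \<in> ?E" using ne by blast
  then have "?E \<noteq> {}" by blast
  then have "lambda_max L \<in> ?E" unfolding lambda_max_def using fin Max_in by blast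
  then show "\<exists>v. v \<noteq> 0 \<and> L *v v = lambda_max L *\<^sub>R v" by blast
  show "mu \<le> lambda_max L" if "v \<noteq> 0" "L *v v = mu *\<^sub>R v" for mu v
    unfolding lambda_max_def using fin that by (intro Max_ge) auto
qed

lemma rayleigh:
  fixes L :: "real^'n^'n"
  assumes sym: "transpose L = L" and psd: "\<And>z. 0 \<le> z \<bullet> (L *v z)"
    and ne: "\<exists>v. v \<noteq> 0 \<and> L *v v = mu0 *\<^sub>R v"
  shows "(L *v x) \<bullet> (L *v x) \<le> lambda_max L * (x \<bullet> (L *v x))"
proof -
  define lam where "lam = lambda_max L"
  define Q where "Q z = (L *v z) \<bullet> (L *v z) - lam * (z \<bullet> (L *v z))" for z
  have cont: "continuous_on (sphere 0 1) Q"
    unfolding Q_def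
    by (intro continuous_intros linear_continuous_on matrix_vector_mul_bounded_linear)
  have "sphere (0::real^'n) 1 \<noteq> {}" by simp
  then obtain v where v: "v \<in> sphere 0 1" and vmax: "\<And>y. y \<in> sphere 0 1 \<Longrightarrow> Q y \<le> Q v"
    using continuous_attains_sup[OF compact_sphere _ cont] by blast
  define m where "m = Q v"
  have homog: "Q (c *\<^sub>R u) = c * c * Q u" for c u
    by (simp add: Q_def matrix_vector_mult_scaleR algebra_simps)
  have Qle: "Q z \<le> m * (z \<bullet> z)" for z
  proof (cases "z = 0")
    case True then show ?thesis by (simp add: Q_def)
  next
    case False
    define u where "u = (1 / norm z) *\<^sub>R z"
    have u: "u \<in> sphere 0 1" using False by (simp add: u_def)
    have z: "z = norm z *\<^sub>R u" using False by (simp add: u_def)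
    have "Q z = norm z * norm z * Q u" by (subst z, rule homog)
    also have "\<dots> \<le> norm z * norm z * m" using vmax[OF u] by (simp add: m_def mult_left_mono)
    also have "norm z * norm z = z \<bullet> z" by (simp add: dot_square_norm power2_eq_square)
    finally show ?thesis by (simp add: mult.commute)
  qed
  have "m \<le> 0"
  proof (rule ccontr)
    assume "\<not> m \<le> 0"
    then have mpos: "m > 0" by simp
    define g where "g z = m *\<^sub>R z - L *v (L *v z) + lam *\<^sub>R (L *v z)" for z
    have gadd: "g (u + w) = g u + g w" for u w
      by (simp add: g_def matrix_vector_right_distrib algebra_simps)
    have gscl: "g (c *\<^sub>R u) = c *\<^sub>R g u" for c u
      by (simp add: g_def matrix_vector_mult_scaleR algebra_simps)
    have LL: "z \<bullet> (L *v (L *v z)) = (L *v z) \<bullet> (L *v z)" for z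
      using selfadj[OF sym, of z "L *v z"] by simp
    have gq: "z \<bullet> g z = m * (z \<bullet> z) - Q z" for z
      by (simp add: g_def Q_def inner_diff_right inner_add_right LL)
    have gsa: "g u \<bullet> w = u \<bullet> g w" for u w
    proof -
      have "(L *v (L *v u)) \<bullet> w = u \<bullet> (L *v (L *v w))"
        using selfadj[OF sym, of "L *v u" w] selfadj[OF sym, of u "L *v w"] by simp
      moreover have "w \<bullet> (L *v u) = u \<bullet> (L *v w)"
        using selfadj[OF sym, of u w] by (simp add: inner_commute)
      ultimately show ?thesis
        by (simp add: g_def inner_diff_left inner_diff_right inner_add_left inner_add_right
            selfadj[OF sym] inner_commute)
    qed
    have gpsd: "0 \<le> z \<bullet> g z" for z using Qle[of z] gq[of z] by simp
    have "v \<bullet> v = 1" using v by (simp add: dot_square_norm)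
    then have "v \<bullet> g v = 0" using gq[of v] by (simp add: m_def)
    then have gv: "g v = 0" by (rule psd_kernel[OF gadd gscl gsa gpsd])
    then have key: "L *v (L *v v) - lam *\<^sub>R (L *v v) - m *\<^sub>R v = 0"
      by (simp add: g_def algebra_simps)
    define d where "d = sqrt (lam * lam + 4 * m)"
    have "0 \<le> lam * lam + 4 * m" using mpos by (simp add: add_nonneg_nonneg)
    then have d: "d * d = lam * lam + 4 * m" unfolding d_def by simp
    define r1 where "r1 = (lam + d) / 2"
    define r2 where "r2 = (lam - d) / 2"
    have rs: "r1 + r2 = lam" "r1 * r2 = - m" using d by (simp_all add: r1_def r2_def field_simps)
    have rroot: "r * r - lam * r = m" if "r = r1 \<or> r = r2" for r
    proof -
      have "r = (lam + d) / 2 \<or> r = (lam - d) / 2" using that by (simp add: r1_def r2_def)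
      then have "2 * r - lam = d \<or> 2 * r - lam = - d" by auto
      then have "(2 * r - lam) * (2 * r - lam) = d * d" by auto
      then show ?thesis using d by (simp add: algebra_simps)
    qed
    obtain r w where rw: "r = r1 \<or> r = r2" "w \<noteq> 0" "L *v w = r *\<^sub>R w"
    proof (cases "L *v v - r2 *\<^sub>R v = 0")
      case True
      have "v \<noteq> 0" using v by auto
      then show ?thesis using True that[of r2 v] by simp
    next
      case False
      define w where "w = L *v v - r2 *\<^sub>R v"
      have "L *v w - r1 *\<^sub>R w = L *v (L *v v) - (r1 + r2) *\<^sub>R (L *v v) + (r1 * r2) *\<^sub>R v"
        by (simp add: w_def matrix_vector_mult_diff_distrib matrix_vector_mult_scaleR algebra_simps)
      also have "\<dots> = 0" using key rs by (simp add: algebra_simps)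
      finally have "L *v w = r1 *\<^sub>R w" by simp
      then show ?thesis using False that[of r1 w] by (simp add: w_def)
    qed
    have rle: "r \<le> lam" unfolding lam_def using lam_max_facts(2)[OF sym ne rw(2,3)] .
    have "0 \<le> w \<bullet> (L *v w)" by (rule psd)
    then have "0 \<le> r * (w \<bullet> w)" using rw by simp
    moreover have "w \<bullet> w > 0" using rw(2) by simp
    ultimately have "0 \<le> r" by (simp add: zero_le_mult_iff)
    then have "r * (r - lam) \<le> 0" using rle by (intro mult_nonneg_nonpos) auto
    then have "r * r - lam * r \<le> 0" by (simp add: algebra_simps)
    then show False using rroot[OF rw(1)] mpos by simp
  qed
  then have "m * (x \<bullet> x) \<le> 0" by (intro mult_nonpos_nonneg) auto
  then have "Q x \<le> 0" using Qle[of x] by linarith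
  then show ?thesis by (simp add: Q_def lam_def)
qed


lemma contraction:
  fixes L :: "real^'n^'n"
  assumes sym: "transpose L = L" and psd: "\<And>z. 0 \<le> z \<bullet> (L *v z)"
    and ne: "\<exists>v. v \<noteq> 0 \<and> L *v v = mu0 *\<^sub>R v"
    and lam0: "0 \<le> lambda_max L" and D0: "D0 * lambda_max L < 2"
    and Dl: "0 < Dl" "Dl \<le> D" "D \<le> D0"
    and c: "0 \<le> c" "c * (e \<bullet> e) \<le> e \<bullet> (L *v e)"
  shows "(e - D *\<^sub>R (L *v e)) \<bullet> (e - D *\<^sub>R (L *v e))
           \<le> (1 - Dl * (2 - D0 * lambda_max L) * c) * (e \<bullet> e)"
proof -
  define lam where "lam = lambda_max L"
  define q where "q = e \<bullet> (L *v e)"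
  have Le: "(L *v e) \<bullet> e = q" using selfadj[OF sym, of e e] by (simp add: q_def)
  have "(e - D *\<^sub>R (L *v e)) \<bullet> (e - D *\<^sub>R (L *v e))
        = e \<bullet> e - 2 * D * q + D * D * ((L *v e) \<bullet> (L *v e))"
    by (simp add: inner_diff_left inner_diff_right Le q_def algebra_simps)
  also have "D * D * ((L *v e) \<bullet> (L *v e)) \<le> D * D * (lam * q)"
    using rayleigh[OF sym psd ne, of e] by (simp add: mult_left_mono lam_def q_def)
  finally have 1: "(e - D *\<^sub>R (L *v e)) \<bullet> (e - D *\<^sub>R (L *v e)) \<le> e \<bullet> e - D * q * (2 - D * lam)"
    by (simp add: algebra_simps)
  have "D * lam \<le> D0 * lam" using Dl lam0 by (simp add: mult_right_mono lam_def)
  then have 2: "2 - D0 * lam \<le> 2 - D * lam" by simp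
  have 3: "0 \<le> 2 - D0 * lam" using D0 by (simp add: lam_def)
  have "0 \<le> c * (e \<bullet> e)" using c by simp
  have cq: "c * (e \<bullet> e) \<le> q" using c(2) by (simp add: q_def)
  have q0: "0 \<le> q" using psd by (simp add: q_def)
  have 4: "Dl * (c * (e \<bullet> e)) \<le> D * q" using Dl cq q0 \<open>0 \<le> c * (e \<bullet> e)\<close>
    by (intro mult_mono) auto
  have 5: "0 \<le> D * q" using Dl q0 by simp
  have "Dl * (c * (e \<bullet> e)) * (2 - D0 * lam) \<le> D * q * (2 - D * lam)"
    by (rule mult_mono[OF 4 2 5 3])
  with 1 show ?thesis by (simp add: lam_def algebra_simps)
qed

section \<open>Laplacian\<close>

definition bb :: "('n::finite \<Rightarrow> 'n \<Rightarrow> real) \<Rightarrow> 'n \<Rightarrow> 'n \<Rightarrow> real" where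
  "bb a i j = (if i = j then 0 else a i j)"

lemma lap_apply:
  "(laplacian a *v v) $ i = (\<Sum>j\<in>UNIV. bb a i j * (v $ i - v $ j))"
proof -
  have "(laplacian a *v v) $ i = (\<Sum>j\<in>UNIV. laplacian a $ i $ j * v $ j)"
    by (simp add: matrix_vector_mult_def)
  also have "\<dots> = laplacian a $ i $ i * v $ i + (\<Sum>j\<in>UNIV - {i}. laplacian a $ i $ j * v $ j)"
    by (simp add: sum.remove)
  also have "(\<Sum>j\<in>UNIV - {i}. laplacian a $ i $ j * v $ j) = (\<Sum>j\<in>UNIV - {i}. - a i j * v $ j)"
    by (intro sum.cong) (auto simp: laplacian_def)
  also have "laplacian a $ i $ i = (\<Sum>j\<in>UNIV - {i}. a i j)" by (simp add: laplacian_def)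
  also have "(\<Sum>j\<in>UNIV - {i}. a i j) * v $ i + (\<Sum>j\<in>UNIV - {i}. - a i j * v $ j)
      = (\<Sum>j\<in>UNIV - {i}. a i j * (v $ i - v $ j))"
  proof -
    have "(\<Sum>j\<in>UNIV - {i}. a i j) * v $ i + (\<Sum>j\<in>UNIV - {i}. - a i j * v $ j)
       = (\<Sum>j\<in>UNIV - {i}. a i j * v $ i) + (\<Sum>j\<in>UNIV - {i}. - a i j * v $ j)"
      by (simp add: sum_distrib_right)
    also have "\<dots> = (\<Sum>j\<in>UNIV - {i}. a i j * (v $ i - v $ j))"
      by (simp add: sum_subtractf sum_negf algebra_simps)
    finally show ?thesis .
  qed
  also have "\<dots> = (\<Sum>j\<in>UNIV - {i}. bb a i j * (v $ i - v $ j))"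
    by (intro sum.cong) (auto simp: bb_def)
  also have "\<dots> = (\<Sum>j\<in>UNIV. bb a i j * (v $ i - v $ j))"
    by (simp add: sum.remove[of UNIV i] bb_def)
  finally show ?thesis .
qed

lemma bb_sym:
  assumes "transpose (laplacian a) = laplacian a"
  shows "bb a i j = bb a j i"
proof (cases "i = j")
  case False
  have "transpose (laplacian a) $ i $ j = laplacian a $ i $ j" using assms by simp
  then show ?thesis using False by (simp add: transpose_def laplacian_def bb_def)
qed (simp add: bb_def)

lemma sum_swap_sym:
  fixes f :: "'n::finite \<Rightarrow> 'n \<Rightarrow> real"
  shows "(\<Sum>i\<in>UNIV. \<Sum>j\<in>UNIV. f i j) = (\<Sum>i\<in>UNIV. \<Sum>j\<in>UNIV. f j i)"
  by (rule sum.swap)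

lemma lap_sum_zero:
  assumes "transpose (laplacian a) = laplacian a"
  shows "(\<Sum>i\<in>UNIV. (laplacian a *v v) $ i) = 0"
proof -
  have "(\<Sum>i\<in>UNIV. (laplacian a *v v) $ i)
      = (\<Sum>i\<in>UNIV. \<Sum>j\<in>UNIV. bb a i j * v $ i) - (\<Sum>i\<in>UNIV. \<Sum>j\<in>UNIV. bb a i j * v $ j)"
    by (simp add: lap_apply sum_subtractf[symmetric] algebra_simps)
  also have "(\<Sum>i\<in>UNIV. \<Sum>j\<in>UNIV. bb a i j * v $ j) = (\<Sum>i\<in>UNIV. \<Sum>j\<in>UNIV. bb a j i * v $ i)"
    by (rule sum.swap)
  also have "\<dots> = (\<Sum>i\<in>UNIV. \<Sum>j\<in>UNIV. bb a i j * v $ i)"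
    using bb_sym[OF assms] by simp
  finally show ?thesis by simp
qed

lemma lap_quad:
  assumes "transpose (laplacian a) = laplacian a"
  shows "2 * (v \<bullet> (laplacian a *v v)) = (\<Sum>i\<in>UNIV. \<Sum>j\<in>UNIV. bb a i j * (v $ i - v $ j)^2)"
proof -
  define T where "T = (\<Sum>i\<in>UNIV. \<Sum>j\<in>UNIV. bb a i j * (v $ i * (v $ i - v $ j)))"
  have T: "v \<bullet> (laplacian a *v v) = T"
    by (simp add: inner_vec_def lap_apply T_def sum_distrib_left algebra_simps)
  have "T = (\<Sum>i\<in>UNIV. \<Sum>j\<in>UNIV. bb a j i * (v $ j * (v $ j - v $ i)))"
    unfolding T_def by (rule sum.swap)
  also have "\<dots> = (\<Sum>i\<in>UNIV. \<Sum>j\<in>UNIV. bb a i j * (v $ j * (v $ j - v $ i)))"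
    using bb_sym[OF assms] by simp
  finally have T2: "T = \<dots>" .
  have "2 * T = (\<Sum>i\<in>UNIV. \<Sum>j\<in>UNIV. bb a i j * (v $ i * (v $ i - v $ j)) + bb a i j * (v $ j * (v $ j - v $ i)))"
    using T2 T_def by (simp add: sum.distrib)
  also have "\<dots> = (\<Sum>i\<in>UNIV. \<Sum>j\<in>UNIV. bb a i j * (v $ i - v $ j)^2)"
    by (intro sum.cong refl) (simp add: power2_eq_square algebra_simps)
  finally show ?thesis using T by simp
qed

lemma bb_nonneg: "\<forall>i j. a i j \<in> {0, 1} \<Longrightarrow> 0 \<le> bb a i j"
proof -
  assume "\<forall>i j. a i j \<in> {0, 1}"
  then have "a i j = 0 \<or> a i j = 1" by auto
  then show ?thesis by (auto simp: bb_def)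
qed

lemma lap_psd:
  assumes "\<forall>i j. a i j \<in> {0, 1}" "transpose (laplacian a) = laplacian a"
  shows "0 \<le> v \<bullet> (laplacian a *v v)"
proof -
  have "0 \<le> (\<Sum>i\<in>UNIV. \<Sum>j\<in>UNIV. bb a i j * (v $ i - v $ j)^2)"
    using bb_nonneg[OF assms(1)] by (intro sum_nonneg mult_nonneg_nonneg) auto
  then show ?thesis using lap_quad[OF assms(2), of v] by simp
qed

lemma lap_one: "laplacian a *v (\<chi> i. 1) = 0"
  by (simp add: vec_eq_iff lap_apply)

lemma lap_conn:
  assumes adj: "\<forall>i j. a i j \<in> {0, 1}" and sym: "transpose (laplacian a) = laplacian a"
    and irr: "irreducible_mat (laplacian a)"
    and q0: "v \<bullet> (laplacian a *v v) = 0"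
  shows "v $ i = v $ j"
proof -
  have "(\<Sum>i\<in>UNIV. \<Sum>j\<in>UNIV. bb a i j * (v $ i - v $ j)^2) = 0"
    using lap_quad[OF sym, of v] q0 by simp
  then have "\<forall>i\<in>UNIV. (\<Sum>j\<in>UNIV. bb a i j * (v $ i - v $ j)^2) = 0"
    using bb_nonneg[OF adj] by (subst (asm) sum_nonneg_eq_0_iff) (auto intro!: sum_nonneg)
  then have z: "bb a i j * (v $ i - v $ j)^2 = 0" for i j
    using bb_nonneg[OF adj] by (subst (asm) sum_nonneg_eq_0_iff) auto
  have edge: "v $ i = v $ j" if "laplacian a $ i $ j \<noteq> 0" "i \<noteq> j" for i j
  proof -
    have "a i j \<noteq> 0" using that by (simp add: laplacian_def)
    then have "bb a i j = 1" using adj that by (auto simp: bb_def)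
    then show ?thesis using z[of i j] by simp
  qed
  define S where "S = {k. v $ k = v $ i}"
  have "S = UNIV"
  proof (rule ccontr)
    assume "S \<noteq> UNIV"
    moreover have "S \<noteq> {}" by (auto simp: S_def)
    ultimately obtain k l where "k \<in> S" "l \<notin> S" "laplacian a $ k $ l \<noteq> 0"
      using irr unfolding irreducible_mat_def by blast
    moreover have "k \<noteq> l" using calculation by auto
    ultimately show False using edge by (auto simp: S_def)
  qed
  then have "j \<in> S" by blast
  then show ?thesis by (simp add: S_def)
qed

lemma lap_coercive:
  fixes a :: "'n::finite \<Rightarrow> 'n \<Rightarrow> real"
  assumes adj: "\<forall>i j. a i j \<in> {0, 1}" and sym: "transpose (laplacian a) = laplacian a"
    and irr: "irreducible_mat (laplacian a)"
  shows "\<exists>c>0. \<forall>e. (\<Sum>i\<in>UNIV. e $ i) = 0 \<longrightarrow> c * (e \<bullet> e) \<le> e \<bullet> (laplacian a *v e)"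
proof -
  let ?L = "laplacian a"
  define K where "K = sphere (0::real^'n) 1 \<inter> {e. (\<Sum>i\<in>UNIV. e $ i) = 0}"
  have W0: "e = 0" if "(\<Sum>i\<in>UNIV. e $ i) = 0" "e \<bullet> (?L *v e) = 0" for e :: "real^'n"
  proof -
    obtain i0 :: 'n where True by blast
    have "e $ i = e $ i0" for i using lap_conn[OF adj sym irr that(2)] by blast
    then have "(\<Sum>i\<in>UNIV. e $ i) = (\<Sum>i\<in>(UNIV::'n set). e $ i0)" by (intro sum.cong) auto
    then have "(\<Sum>i\<in>UNIV. e $ i) = of_nat CARD('n) * e $ i0" by simp
    then have "e $ i0 = 0" using that(1) by simp
    then show ?thesis using \<open>\<And>i. e $ i = e $ i0\<close> by (simp add: vec_eq_iff)
  qed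
  have homog: "(c *\<^sub>R u) \<bullet> (?L *v (c *\<^sub>R u)) = c * c * (u \<bullet> (?L *v u))" for c u
    by (simp add: matrix_vector_mult_scaleR)
  show ?thesis
  proof (cases "K = {}")
    case True
    have "e = 0" if "(\<Sum>i\<in>UNIV. e $ i) = 0" for e :: "real^'n"
    proof (rule ccontr)
      assume "e \<noteq> 0"
      define u where "u = (1 / norm e) *\<^sub>R e"
      have "(\<Sum>i\<in>UNIV. u $ i) = (1 / norm e) * (\<Sum>i\<in>UNIV. e $ i)"
        by (simp add: u_def sum_distrib_left)
      then have "u \<in> K" using \<open>e \<noteq> 0\<close> that by (simp add: K_def u_def)
      then show False using True by blast
    qed
    then show ?thesis by (intro exI[of _ 1]) (metis inner_zero_left less_numeral_extra(1) mult_zero_right order_refl)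
  next
    case False
    have "closed {e::real^'n. (\<Sum>i\<in>UNIV. e $ i) = 0}"
      by (intro closed_Collect_eq continuous_intros)
    then have "compact K" unfolding K_def by (intro compact_Int_closed) auto
    moreover have "continuous_on K (\<lambda>e. e \<bullet> (?L *v e))"
      by (intro continuous_intros linear_continuous_on matrix_vector_mul_bounded_linear)
    ultimately obtain e0 where e0: "e0 \<in> K" and emin: "\<And>y. y \<in> K \<Longrightarrow> e0 \<bullet> (?L *v e0) \<le> y \<bullet> (?L *v y)"
      using continuous_attains_inf[OF _ False] by blast
    define c where "c = e0 \<bullet> (?L *v e0)"
    have "c \<noteq> 0" using W0[of e0] e0 by (auto simp: K_def c_def)
    then have cpos: "c > 0" using lap_psd[OF adj sym, of e0] by (simp add: c_def)
    have "c * (e \<bullet> e) \<le> e \<bullet> (?L *v e)" if "(\<Sum>i\<in>UNIV. e $ i) = 0" for e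
    proof (cases "e = 0")
      case True then show ?thesis by simp
    next
      case ne: False
      define u where "u = (1 / norm e) *\<^sub>R e"
      have "(\<Sum>i\<in>UNIV. u $ i) = (1 / norm e) * (\<Sum>i\<in>UNIV. e $ i)"
        by (simp add: u_def sum_distrib_left)
      then have uK: "u \<in> K" using ne that by (simp add: K_def u_def)
      have ez: "e = norm e *\<^sub>R u" using ne by (simp add: u_def)
      have "e \<bullet> (?L *v e) = norm e * norm e * (u \<bullet> (?L *v u))" by (subst (1 2) ez, rule homog)
      moreover have "c \<le> u \<bullet> (?L *v u)" using emin[OF uK] by (simp add: c_def)
      moreover have "norm e * norm e = e \<bullet> e" by (simp add: dot_square_norm power2_eq_square)
      ultimately show ?thesis by (metis mult.commute mult_left_mono inner_ge_zero)
    qed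
    then show ?thesis using cpos by blast
  qed
qed



lemma key_ineq:
  fixes x c :: real
  assumes x: "0 < x" and c: "0 \<le> c"
  shows "x powr c * (1 + c / (x + 1)) \<le> (x + 1) powr c"
proof -
  define y where "y = (x + 1) / x"
  have y: "1 < y" using x by (simp add: y_def)
  have "ln (1 / y) \<le> 1 / y - 1" using y by (intro ln_le_minus_one) simp
  then have "1 - 1 / y \<le> ln y" using y by (simp add: ln_div)
  moreover have "1 - 1 / y = 1 / (x + 1)" using x by (simp add: y_def field_simps)
  ultimately have "c / (x + 1) \<le> c * ln y" using c by (metis mult_left_mono times_divide_eq_right mult_1_right)
  also have "c * ln y \<le> exp (c * ln y) - 1"
  proof -
    have "1 + c * ln y \<le> exp (c * ln y)" by (rule exp_ge_add_one_self)
    then show ?thesis by linarith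
  qed
  also have "exp (c * ln y) = y powr c" using y by (simp add: powr_def mult.commute)
  finally have 1: "1 + c / (x + 1) \<le> y powr c" by simp
  have "x powr c * (1 + c / (x + 1)) \<le> x powr c * y powr c"
    using 1 by (intro mult_left_mono) auto
  also have "\<dots> = (x * y) powr c" using x y by (simp add: powr_mult)
  also have "x * y = x + 1" using x by (simp add: y_def)
  finally show ?thesis .
qed

lemma growth_contra:
  fixes \<alpha> \<beta> A c :: real
  assumes a: "0 < \<alpha>" and c: "0 \<le> c" "c < 1" and A: "0 \<le> A"
    and bound: "\<And>j. m0 \<le> j \<Longrightarrow> \<alpha> * real j - \<beta> \<le> A * real j powr c"
  shows False
proof -
  define Y where "Y = max (2 * A / \<alpha>) 1"
  define j where "j = nat \<lceil>max (real m0) (max (2 * \<beta> / \<alpha> + 1) (Y powr (1 / (1 - c))))\<rceil> + 1"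
  have j1: "real m0 \<le> real j" "2 * \<beta> / \<alpha> + 1 \<le> real j" "Y powr (1 / (1 - c)) \<le> real j"
    unfolding j_def by linarith+
  have Y: "1 \<le> Y" "2 * A / \<alpha> \<le> Y" by (auto simp: Y_def)
  have jpos: "1 \<le> real j" unfolding j_def by simp
  have "Y = (Y powr (1 / (1 - c))) powr (1 - c)" using Y c by (simp add: powr_powr)
  also have "\<dots> \<le> real j powr (1 - c)" using j1(3) c Y by (intro powr_mono2) auto
  finally have jY: "Y \<le> real j powr (1 - c)" .
  have "A * real j powr c \<le> \<alpha> / 2 * real j"
  proof -
    have "2 * A / \<alpha> \<le> real j powr (1 - c)" using jY Y by linarith
    then have "A \<le> \<alpha> / 2 * real j powr (1 - c)" using a by (simp add: field_simps)
    then have "A * real j powr c \<le> \<alpha> / 2 * real j powr (1 - c) * real j powr c"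
      by (intro mult_right_mono) auto
    moreover have "real j powr (1 - c) * real j powr c = real j" using jpos
      by (simp add: powr_add[symmetric])
    ultimately show ?thesis by (simp add: mult.assoc)
  qed
  moreover have "\<alpha> / 2 * real j < \<alpha> * real j - \<beta>"
  proof -
    have "2 * \<beta> / \<alpha> < real j" using j1(2) by linarith
    then have "2 * \<beta> < \<alpha> * real j" using a by (simp add: divide_less_eq mult.commute)
    then show ?thesis by simp
  qed
  moreover have "m0 \<le> j" using j1(1) by simp
  ultimately show False using bound[of j] by linarith
qed

lemma seq_props:
  fixes t :: "nat \<Rightarrow> real"
  assumes inc: "\<And>k. 1 \<le> k \<Longrightarrow> t k + Dl \<le> t (Suc k)" and Dl: "0 < Dl"
  shows seq_mono: "\<And>k k'. 1 \<le> k \<Longrightarrow> k \<le> k' \<Longrightarrow> t k \<le> t k'"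
    and seq_lin: "\<And>k. 1 \<le> k \<Longrightarrow> t 1 + real (k - 1) * Dl \<le> t k"
    and seq_unb: "\<And>K X. \<exists>k\<ge>K. X < t k"
proof -
  show mono: "t k \<le> t k'" if "1 \<le> k" "k \<le> k'" for k k'
    using that(2,1)
  proof (induction k' rule: dec_induct)
    case (step n)
    have "t k \<le> t n" using step by simp
    moreover have "t n + Dl \<le> t (Suc n)" using inc[of n] step.hyps that(1) by simp
    ultimately show ?case using Dl by linarith
  qed simp
  show lin: "t 1 + real (k - 1) * Dl \<le> t k" if "1 \<le> k" for k
    using that
  proof (induction k rule: dec_induct)
    case (step n)
    have "t 1 + real (Suc n - 1) * Dl = t 1 + real (n - 1) * Dl + Dl" using step.hyps
      by (simp add: of_nat_diff algebra_simps)
    also have "\<dots> \<le> t n + Dl" using step.IH by simp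
    also have "\<dots> \<le> t (Suc n)" using inc[of n] step.hyps by simp
    finally show ?case .
  qed simp
  show "\<exists>k\<ge>K. X < t k" for K X
  proof -
    obtain n :: nat where n: "(X - t 1) / Dl < real n" using reals_Archimedean2 by blast
    define k where "k = max K n + 1"
    have "X - t 1 < real n * Dl" using n Dl by (simp add: divide_less_eq)
    also have "real n * Dl \<le> real (k - 1) * Dl" using Dl by (intro mult_right_mono) (auto simp: k_def)
    finally have "X < t k" using lin[of k] by (simp add: k_def)
    then show ?thesis by (intro exI[of _ k]) (simp add: k_def)
  qed
qed

lemma seq_last:
  fixes t :: "nat \<Rightarrow> real"
  assumes unb: "\<And>K X. \<exists>k\<ge>K. X < t k" and tK: "t K \<le> X"
  shows "\<exists>k\<ge>K. t k \<le> X \<and> X < t (Suc k)"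
proof -
  obtain k1 where "k1 \<ge> Suc K" "X < t k1" using unb by blast
  then have ex: "\<exists>k. K \<le> k \<and> X < t (Suc k)" by (intro exI[of _ "k1 - 1"]) auto
  define k where "k = (LEAST k. K \<le> k \<and> X < t (Suc k))"
  have k: "K \<le> k" "X < t (Suc k)" using LeastI_ex[OF ex] by (simp_all add: k_def)
  have "t k \<le> X"
  proof (cases "k = K")
    case True then show ?thesis using tK by simp
  next
    case False
    then have "K \<le> k - 1" "k - 1 < k" using k by auto
    then have "\<not> (K \<le> k - 1 \<and> X < t (Suc (k - 1)))"
      using not_less_Least[of "k - 1" "\<lambda>k. K \<le> k \<and> X < t (Suc k)"] unfolding k_def by blast
    then show ?thesis using \<open>K \<le> k - 1\<close> False k(1) by (simp add: Suc_diff_1) 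
  qed
  then show ?thesis using k by blast
qed


lemma lin_interp:
  fixes f :: "real \<Rightarrow> real"
  assumes ab: "a < b" and cont: "continuous_on {a..b} f"
    and der: "\<And>s. s \<in> {a<..<b} \<Longrightarrow> (f has_real_derivative c) (at s)"
    and s: "s \<in> {a..b}"
  shows "f s = f a + c * (s - a)"
proof (cases "s = a")
  case False
  then have as: "a < s" using s by simp
  define g where "g y = f y - c * (y - a)" for y
  have "continuous_on {a..s} g" unfolding g_def
    using continuous_on_subset[OF cont] s by (intro continuous_intros) auto
  moreover have "(g has_real_derivative 0) (at y)" if "a < y" "y < s" for y
  proof -
    have fd: "(f has_real_derivative c) (at y)" using der that s by simp
    have d2: "((\<lambda>z. c * (z - a)) has_real_derivative c * (1 - 0)) (at y)"
      by (intro DERIV_cmult DERIV_diff DERIV_ident DERIV_const)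
    have "(g has_real_derivative (c - c * (1 - 0))) (at y)" unfolding g_def
      by (rule DERIV_diff[OF fd d2])
    then show ?thesis by simp
  qed
  ultimately have "g s = g a" by (intro DERIV_isconst_end[OF as]) auto
  then show ?thesis by (simp add: g_def)
qed simp

lemma decay:
  fixes ee :: "nat \<Rightarrow> real"
  assumes nn: "\<And>k. 0 \<le> ee k" and mono: "\<And>k. 1 \<le> k \<Longrightarrow> ee (Suc k) \<le> ee k"
    and good: "\<And>K. \<exists>k\<ge>K. 1 \<le> k \<and> ee (Suc k) \<le> r * ee k"
    and r: "0 \<le> r" "r < 1" and that: "0 < \<epsilon>"
  shows "\<exists>K\<ge>1. \<forall>k\<ge>K. ee k < \<epsilon>"
proof -
  have monoK: "ee k' \<le> ee k" if "1 \<le> k" "k \<le> k'" for k k'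
    using that(2,1)
  proof (induction k' rule: dec_induct)
    case (step n) then show ?case using mono[of n] by simp
  qed simp
  have pw: "\<exists>k\<ge>1. ee k \<le> r ^ n * ee 1" for n
  proof (induction n)
    case 0 then show ?case by auto
  next
    case (Suc n)
    then obtain k where k: "1 \<le> k" "ee k \<le> r ^ n * ee 1" by blast
    obtain k' where k': "k' \<ge> k" "1 \<le> k'" "ee (Suc k') \<le> r * ee k'" using good by blast
    have "ee (Suc k') \<le> r * ee k" using k' monoK[OF k(1) k'(1)] r by (meson mult_left_mono order_trans)
    also have "\<dots> \<le> r * (r ^ n * ee 1)" using k r by (simp add: mult_left_mono)
    finally show ?case by (intro exI[of _ "Suc k'"]) simp
  qed
  have "(\<lambda>n. r ^ n * ee 1) \<longlonglongrightarrow> 0 * ee 1"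
    by (intro tendsto_mult LIMSEQ_realpow_zero r tendsto_const)
  from LIMSEQ_D[OF this that] obtain n0 where "\<forall>n\<ge>n0. norm (r ^ n * ee 1 - 0 * ee 1) < \<epsilon>" by blast
  then have "r ^ n0 * ee 1 < \<epsilon>" by auto
  then obtain n where "r ^ n * ee 1 < \<epsilon>" by blast
  then obtain K where K: "1 \<le> K" "ee K < \<epsilon>" using pw[of n] by force
  then show ?thesis using monoK[OF K(1)] by (intro exI[of _ K]) (auto intro: le_less_trans)
qed



locale dosl =
  fixes M :: enat and h tau :: "nat \<Rightarrow> real"
  assumes dos: "dos_seq M h tau"
begin

abbreviation "vd n \<equiv> dos_idx M n"

lemma vd_down: "vd n \<Longrightarrow> 1 \<le> m \<Longrightarrow> m \<le> n \<Longrightarrow> vd m"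
  unfolding dos_idx_def by (meson enat_ord_simps(1) order_trans)

lemma vd_ge1: "vd n \<Longrightarrow> 1 \<le> n" by (simp add: dos_idx_def)

lemma tau_nn: "vd n \<Longrightarrow> 0 \<le> tau n"
  using dos by (simp add: dos_seq_def)

lemma step_lt: "vd n \<Longrightarrow> vd (Suc n) \<Longrightarrow> h n + tau n < h (Suc n)"
  using dos by (simp add: dos_seq_def)

lemma strict: "vd j \<Longrightarrow> 1 \<le> i \<Longrightarrow> i < j \<Longrightarrow> h i + tau i < h j"
proof (induction j)
  case 0 then show ?case by simp
next
  case (Suc j)
  have vj: "vd j" using Suc.prems vd_down[of "Suc j" j] by simp
  show ?case
  proof (cases "i = j")
    case True then show ?thesis using step_lt vj Suc.prems by simp
  next
    case False
    then have "h i + tau i < h j" using Suc vj by simp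
    moreover have "h j + tau j < h (Suc j)" using step_lt vj Suc.prems by simp
    moreover have "0 \<le> tau j" using tau_nn vj by simp
    ultimately show ?thesis by linarith
  qed
qed

lemma h_nn: "vd n \<Longrightarrow> 0 \<le> h n"
proof -
  assume v: "vd n"
  have v1: "vd 1" using vd_down[OF v] vd_ge1[OF v] by simp
  then have "0 \<le> h 1" using dos by (simp add: dos_seq_def)
  show "0 \<le> h n"
  proof (cases "n = 1")
    case True then show ?thesis using \<open>0 \<le> h 1\<close> by simp
  next
    case False
    then have "h 1 + tau 1 < h n" using strict[OF v, of 1] vd_ge1[OF v] by simp
    then show ?thesis using \<open>0 \<le> h 1\<close> tau_nn[OF v1] by linarith
  qed
qed

lemma h_pos: "vd n \<Longrightarrow> 2 \<le> n \<Longrightarrow> 0 < h n"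
proof -
  assume v: "vd n" "2 \<le> n"
  have v1: "vd 1" using vd_down[OF v(1), of 1] v(2) by simp
  have "h 1 + tau 1 < h n" using strict[OF v(1), of 1] v by simp
  then show ?thesis using h_nn[OF v1] tau_nn[OF v1] by linarith
qed

lemma h_le: "vd j \<Longrightarrow> 1 \<le> i \<Longrightarrow> i \<le> j \<Longrightarrow> h i \<le> h j"
  using strict[of j i] tau_nn[of i] vd_down[of j i] by (cases "i = j") force+

lemma end_le: "vd j \<Longrightarrow> 1 \<le> i \<Longrightarrow> i \<le> j \<Longrightarrow> h i + tau i \<le> h j + tau j"
  using strict[of j i] tau_nn[of j] by (cases "i = j") force+

lemma h_lt: "vd j \<Longrightarrow> 1 \<le> i \<Longrightarrow> i < j \<Longrightarrow> h i < h j"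
  using strict[of j i] tau_nn[of i] vd_down[of j i] by force

lemma phase_d_unique:
  assumes "phase_d M h tau n s" "phase_d M h tau n' s"
  shows "n = n'"
proof (rule ccontr)
  assume "n \<noteq> n'"
  then consider "n < n'" | "n' < n" by linarith
  then show False
  proof cases
    case 1
    have v: "vd n'" "vd n" using assms by (auto simp: phase_d_def)
    have "vd (Suc n)" using vd_down[OF v(1), of "Suc n"] 1 by simp
    then have "s < h (Suc n) + tau (Suc n)" using assms(1) by (simp add: phase_d_def)
    moreover have "h (Suc n) + tau (Suc n) \<le> h n' + tau n'" using end_le[OF v(1), of "Suc n"] 1 by simp
    moreover have "h n' + tau n' \<le> s" using assms(2) by (simp add: phase_d_def)
    ultimately show False by simp
  next
    case 2
    have v: "vd n" "vd n'" using assms by (auto simp: phase_d_def)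
    have "vd (Suc n')" using vd_down[OF v(1), of "Suc n'"] 2 by simp
    then have "s < h (Suc n') + tau (Suc n')" using assms(2) by (simp add: phase_d_def)
    moreover have "h (Suc n') + tau (Suc n') \<le> h n + tau n" using end_le[OF v(1), of "Suc n'"] 2 by simp
    moreover have "h n + tau n \<le> s" using assms(1) by (simp add: phase_d_def)
    ultimately show False by simp
  qed
qed

lemma phase_f_unique:
  assumes "phase_f M h n s" "phase_f M h n' s"
  shows "n = n'"
proof (rule ccontr)
  assume "n \<noteq> n'"
  then consider "n < n'" | "n' < n" by linarith
  then show False
  proof cases
    case 1
    have v: "vd n'" "vd n" using assms by (auto simp: phase_f_def)
    have "vd (Suc n)" using vd_down[OF v(1), of "Suc n"] 1 by simp
    then have "s < h (Suc n)" using assms(1) by (simp add: phase_f_def)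
    moreover have "h (Suc n) \<le> h n'" using h_le[OF v(1), of "Suc n"] 1 by simp
    moreover have "h n' \<le> s" using assms(2) by (simp add: phase_f_def)
    ultimately show False by simp
  next
    case 2
    have v: "vd n" "vd n'" using assms by (auto simp: phase_f_def)
    have "vd (Suc n')" using vd_down[OF v(1), of "Suc n'"] 2 by simp
    then have "s < h (Suc n')" using assms(2) by (simp add: phase_f_def)
    moreover have "h (Suc n') \<le> h n" using h_le[OF v(1), of "Suc n'"] 2 by simp
    moreover have "h n \<le> s" using assms(1) by (simp add: phase_f_def)
    ultimately show False by simp
  qed
qed

lemma phase_d_self: "vd n \<Longrightarrow> phase_d M h tau n (h n + tau n)"
  unfolding phase_d_def using step_lt tau_nn by (smt (verit))

lemma phase_f_self: "vd n \<Longrightarrow> phase_f M h n (h n)"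
  unfolding phase_f_def using step_lt tau_nn by (smt (verit))

lemma phase_d_the: "phase_d M h tau n s \<Longrightarrow> (THE n. phase_d M h tau n s) = n"
  using phase_d_unique by blast

lemma phase_d_the': "phase_d M h tau n s \<Longrightarrow> ell \<le> n \<Longrightarrow> (THE n. ell \<le> n \<and> phase_d M h tau n s) = n"
  using phase_d_unique by blast

lemma phase_f_the': "phase_f M h n s \<Longrightarrow> ell \<le> n \<Longrightarrow> (THE n. ell \<le> n \<and> phase_f M h n s) = n"
  using phase_f_unique by blast

lemma Bd_hat_eq:
  assumes "phase_d M h tau n s" "ell \<le> n"
  shows "Bd_hat M h tau ell e0 th s = Max ({e0} \<union> (\<lambda>i. th * Bd_i M h tau i + (1 - th)) ` {ell..n})"
  using assms phase_d_the'[OF assms] unfolding Bd_hat_def by auto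

lemma Bf_hat_eq:
  assumes "phase_f M h n s" "ell \<le> n"
  shows "Bf_hat M h ell e0 th s = Max ({e0} \<union> (\<lambda>i. Bf_i h i / th) ` {ell..n})"
  using assms phase_f_the'[OF assms] unfolding Bf_hat_def by auto

lemma Bd_hat_ge: "e0 \<le> Bd_hat M h tau ell e0 th s"
  unfolding Bd_hat_def by auto

lemma Bf_hat_ge: "e0 \<le> Bf_hat M h ell e0 th s"
  unfolding Bf_hat_def by auto

lemma Bd_hat_ge_i:
  assumes "vd n" "ell \<le> n"
  shows "th * Bd_i M h tau n + (1 - th) \<le> Bd_hat M h tau ell e0 th (h n + tau n)"
proof -
  have "th * Bd_i M h tau n + (1 - th) \<in> {e0} \<union> (\<lambda>i. th * Bd_i M h tau i + (1 - th)) ` {ell..n}"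
    using assms by auto
  then show ?thesis by (subst Bd_hat_eq[OF phase_d_self[OF assms(1)] assms(2)]) (rule Max_ge, auto)
qed

lemma Bf_hat_ge_i:
  assumes "vd n" "ell \<le> n"
  shows "Bf_i h n / th \<le> Bf_hat M h ell e0 th (h n)"
proof -
  have "Bf_i h n / th \<in> {e0} \<union> (\<lambda>i. Bf_i h i / th) ` {ell..n}"
    using assms by auto
  then show ?thesis by (subst Bf_hat_eq[OF phase_f_self[OF assms(1)] assms(2)]) (rule Max_ge, auto)
qed

lemma Bd_hat_le:
  assumes "e0 \<le> U" "\<And>i. vd i \<Longrightarrow> ell \<le> i \<Longrightarrow> th * Bd_i M h tau i + (1 - th) \<le> U"
    and "1 \<le> ell"
  shows "Bd_hat M h tau ell e0 th s \<le> U"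
proof (cases "\<exists>n. ell \<le> n \<and> phase_d M h tau n s")
  case True
  then obtain n where n: "ell \<le> n" "phase_d M h tau n s" by blast
  have vn: "vd n" using n by (simp add: phase_d_def)
  show ?thesis using assms vd_down[OF vn] \<open>1 \<le> ell\<close>
    by (subst Bd_hat_eq[OF n(2) n(1)]) (auto intro: order_trans)
next
  case False
  have "Bd_hat M h tau ell e0 th s = e0" unfolding Bd_hat_def by (rule if_not_P[OF False])
  then show ?thesis using assms(1) by simp
qed

lemma Bf_hat_le:
  assumes "e0 \<le> U" "\<And>i. vd i \<Longrightarrow> ell \<le> i \<Longrightarrow> Bf_i h i / th \<le> U"
    and "1 \<le> ell"
  shows "Bf_hat M h ell e0 th s \<le> U"
proof (cases "\<exists>n. ell \<le> n \<and> phase_f M h n s")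
  case True
  then obtain n where n: "ell \<le> n" "phase_f M h n s" by blast
  have vn: "vd n" using n by (simp add: phase_f_def)
  show ?thesis using assms vd_down[OF vn] \<open>1 \<le> ell\<close>
    by (subst Bf_hat_eq[OF n(2) n(1)]) (auto intro: order_trans)
next
  case False
  have "Bf_hat M h ell e0 th s = e0" unfolding Bf_hat_def by (rule if_not_P[OF False])
  then show ?thesis using assms(1) by simp
qed

lemma step_eq:
  assumes "phase_d M h tau n s"
  shows "sample_step M h tau ell e0 th D0 g1 s =
     min D0 ((1 - Bd_hat M h tau ell e0 th (h n + tau n)) / (g1 * Bf_hat M h ell e0 th (h n)))"
  using assms phase_d_the[OF assms] unfolding sample_step_def by (auto simp: Let_def)

lemma step_eq0:
  assumes "\<not> (\<exists>n. phase_d M h tau n s)"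
  shows "sample_step M h tau ell e0 th D0 g1 s = D0"
  using assms unfolding sample_step_def by auto


lemma attack_mem:
  assumes "s \<in> dos_attack_set M h tau"
  obtains n where "vd n" "h n \<le> s" "s \<le> h n + tau n" "s = h n \<or> s < h n + tau n"
  using assms tau_nn unfolding dos_attack_set_def by (force)

lemma attack_memI: "vd n \<Longrightarrow> h n \<le> s \<Longrightarrow> s < h n + tau n \<Longrightarrow> s \<in> dos_attack_set M h tau"
  unfolding dos_attack_set_def by auto

lemma attack_memI2: "vd n \<Longrightarrow> h n \<in> dos_attack_set M h tau"
  unfolding dos_attack_set_def by auto

lemma attack_sets: "dos_attack_set M h tau \<in> sets lborel"
proof -
  have "countable {n. vd n}" by (rule countable_subset[OF subset_UNIV]) simp
  then show ?thesis unfolding dos_attack_set_def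
    by (intro sets.countable_UN'') auto
qed

lemma XiI_sets: "XiI M h tau a b \<in> sets lborel"
  unfolding XiI_def by (rule sets.Int[OF attack_sets]) simp

lemma Icc_fm: "{a..b::real} \<in> fmeasurable lborel"
  using fmeasurable_cbox[of a b] by (simp add: cbox_interval)

lemma XiI_fm: "XiI M h tau a b \<in> fmeasurable lborel"
proof (rule fmeasurableI2[OF Icc_fm[of a b]])
  show "XiI M h tau a b \<subseteq> {a..b}" by (auto simp: XiI_def)
  show "XiI M h tau a b \<in> sets lborel" by (rule XiI_sets)
qed

lemma meas_le: "0 \<le> T \<Longrightarrow> measure lborel (XiI M h tau 0 T) \<le> T"
  using measure_mono_fmeasurable[of "XiI M h tau 0 T" "{0..T}" lborel] XiI_sets Icc_fm
  by (auto simp: XiI_def)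

lemma meas_lower:
  assumes S: "finite S" "\<And>k. k \<in> S \<Longrightarrow> vd k" "\<And>k. k \<in> S \<Longrightarrow> h k + tau k \<le> T"
  shows "(\<Sum>k\<in>S. tau k) \<le> measure lborel (XiI M h tau 0 T)"
proof -
  define A where "A k = {h k ..< h k + tau k}" for k
  have "(\<Sum>k\<in>S. tau k) = (\<Sum>k\<in>S. measure lborel (A k))"
    using tau_nn S(2) by (intro sum.cong) (auto simp: A_def)
  also have "\<dots> = measure lborel (\<Union>k\<in>S. A k)"
  proof (rule measure_finite_Union[symmetric])
    show "disjoint_family_on A S"
      unfolding disjoint_family_on_def
    proof (intro ballI impI)
      fix k k' assume kk: "k \<in> S" "k' \<in> S" "k \<noteq> k'"
      show "A k \<inter> A k' = {}"
      proof (cases "k < k'")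
        case True
        then have "h k + tau k < h k'" using strict S(2) kk vd_ge1 by blast
        then show ?thesis by (auto simp: A_def)
      next
        case False
        then have "h k' + tau k' < h k" using strict S(2) kk vd_ge1 by (metis linorder_neqE_nat)
        then show ?thesis by (auto simp: A_def)
      qed
    qed
  qed (use tau_nn S(2) in \<open>auto simp: A_def S\<close>)
  also have "\<dots> \<le> measure lborel (XiI M h tau 0 T)"
  proof (rule measure_mono_fmeasurable[OF _ _ XiI_fm])
    show "(\<Union>k\<in>S. A k) \<subseteq> XiI M h tau 0 T"
    proof
      fix x assume "x \<in> (\<Union>k\<in>S. A k)"
      then obtain k where k: "k \<in> S" "h k \<le> x" "x < h k + tau k" by (auto simp: A_def)
      then have "x \<in> dos_attack_set M h tau" using attack_memI S(2) by blast
      moreover have "0 \<le> x" using h_nn[of k] S(2) k by force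
      moreover have "x \<le> T" using S(3)[OF k(1)] k by simp
      ultimately show "x \<in> XiI M h tau 0 T" by (simp add: XiI_def)
    qed
    show "(\<Union>k\<in>S. A k) \<in> sets lborel" by (auto simp: A_def intro!: sets.finite_UN S(1))
  qed
  finally show ?thesis .
qed

lemma gap_free:
  assumes "vd i" "2 \<le> i" "h (i - 1) + tau (i - 1) < x" "x < h i"
  shows "x \<notin> dos_attack_set M h tau"
proof
  assume "x \<in> dos_attack_set M h tau"
  then obtain n where n: "vd n" "h n \<le> x" "x \<le> h n + tau n" by (rule attack_mem)
  show False
  proof (cases "n \<le> i - 1")
    case True
    then have "h n + tau n \<le> h (i - 1) + tau (i - 1)"
      using end_le[of "i - 1" n] vd_down[OF assms(1), of "i - 1"] assms(2) vd_ge1[OF n(1)] by simp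
    then show False using n assms by simp
  next
    case False
    then have "h i \<le> h n" using h_le[OF n(1), of i] assms(2) by simp
    then show False using n assms by simp
  qed
qed

lemma meas_upper:
  assumes "vd i" "2 \<le> i"
  shows "measure lborel (XiI M h tau 0 (h i + tau i)) \<le> (h i + tau i) - (h i - (h (i - 1) + tau (i - 1)))"
proof -
  define T where "T = h i + tau i"
  define a where "a = h (i - 1) + tau (i - 1)"
  have vi1: "vd (i - 1)" using vd_down[OF assms(1), of "i - 1"] assms(2) by simp
  have a0: "0 \<le> a" using h_nn[OF vi1] tau_nn[OF vi1] by (simp add: a_def)
  have ab: "a < h i" using strict[OF assms(1), of "i - 1"] assms(2) by (simp add: a_def)
  have bT: "h i \<le> T" using tau_nn[OF assms(1)] by (simp add: T_def)
  have sub: "XiI M h tau 0 T \<subseteq> {0..T} - {a<..<h i}"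
    using gap_free[OF assms] by (auto simp: XiI_def a_def)
  have "measure lborel (XiI M h tau 0 T) \<le> measure lborel ({0..T} - {a<..<h i})"
    by (rule measure_mono_fmeasurable[OF sub XiI_sets]) (rule fmeasurable_Diff[OF Icc_fm], simp)
  also have "\<dots> = measure lborel {0..T} - measure lborel {a<..<h i}"
    using a0 ab bT by (intro measure_Diff) (auto simp: emeasure_lborel_Icc_eq)
  also have "\<dots> = T - (h i - a)" using a0 ab bT by simp
  finally show ?thesis by (simp add: T_def a_def)
qed

lemma Bd_lt1:
  assumes "vd i" "2 \<le> i"
  shows "Bd_i M h tau i < 1"
proof -
  define T where "T = h i + tau i"
  have T: "0 < T" using h_pos[OF assms] tau_nn[OF assms(1)] by (simp add: T_def)
  have "h (i - 1) + tau (i - 1) < h i" using strict[OF assms(1), of "i - 1"] assms(2) by simp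
  then have "measure lborel (XiI M h tau 0 T) < T" using meas_upper[OF assms] by (simp add: T_def)
  then show ?thesis using T by (simp add: Bd_i_def T_def[symmetric])
qed

lemma ne_consts:
  assumes ne: "\<not> edge_case M h tau"
  shows "\<exists>B \<kappa> F (\<Lambda>::nat). 0 \<le> B \<and> B < 1 \<and> 0 < \<kappa> \<and>
     (\<forall>t\<ge>0. measure lborel (XiI M h tau 0 t) \<le> \<kappa> + B * t) \<and> 0 \<le> F \<and>
     (\<forall>t\<ge>0. finite (dos_starts M h 0 t) \<and> real (card (dos_starts M h 0 t)) \<le> real \<Lambda> + F * t)"
proof -
  let ?DB = "duration_bounds M h tau"
  have "\<forall>t\<ge>0. measure lborel (XiI M h tau 0 t) \<le> 1 + 1 * t"
  proof (intro allI impI)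
    fix t :: real assume "0 \<le> t"
    then show "measure lborel (XiI M h tau 0 t) \<le> 1 + 1 * t" using meas_le[of t] by simp
  qed
  then have "1 \<in> ?DB" unfolding duration_bounds_def by (auto intro!: exI[of _ 1])
  have bdd: "bdd_below ?DB" unfolding duration_bounds_def by (rule bdd_belowI[of _ 0]) auto
  have "Inf ?DB \<le> 1" by (rule cInf_lower[OF \<open>1 \<in> ?DB\<close> bdd])
  moreover have "Inf ?DB \<noteq> 1" using ne by (simp add: edge_case_def)
  ultimately have "Inf ?DB < 1" by simp
  then obtain B where "B \<in> ?DB" "B < 1" using cInf_lessD[of ?DB 1] \<open>1 \<in> ?DB\<close> by blast
  then obtain \<kappa> where B: "0 \<le> B" "B < 1" "0 < \<kappa>" "\<forall>t\<ge>0. measure lborel (XiI M h tau 0 t) \<le> \<kappa> + B * t"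
    unfolding duration_bounds_def by blast
  have "frequency_bounds M h \<noteq> {}"
  proof
    assume "frequency_bounds M h = {}"
    then have "(INF B\<in>frequency_bounds M h. ereal B) = \<infinity>" by (simp add: top_ereal_def)
    then show False using ne by (simp add: edge_case_def)
  qed
  then obtain F where "F \<in> frequency_bounds M h" by blast
  then obtain \<Lambda> :: nat where F: "0 \<le> F" "\<forall>t\<ge>0. finite (dos_starts M h 0 t) \<and> real (card (dos_starts M h 0 t)) \<le> real \<Lambda> + F * t"
    unfolding frequency_bounds_def by blast
  show ?thesis using B F by blast
qed

end

locale dosb = dosl +
  fixes B \<kappa> F :: real and \<Lambda> :: nat
  assumes B: "0 \<le> B" "B < 1" "0 < \<kappa>"
    and dur: "\<And>t. 0 \<le> t \<Longrightarrow> measure lborel (XiI M h tau 0 t) \<le> \<kappa> + B * t"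
    and F: "0 \<le> F"
    and freq: "\<And>t. 0 \<le> t \<Longrightarrow> finite (dos_starts M h 0 t)"
      "\<And>t. 0 \<le> t \<Longrightarrow> real (card (dos_starts M h 0 t)) \<le> real \<Lambda> + F * t"
begin

lemma count_bound: "vd i \<Longrightarrow> real i \<le> real \<Lambda> + F * h i"
proof -
  assume v: "vd i"
  have sub: "h ` {1..i} \<subseteq> dos_starts M h 0 (h i)"
  proof
    fix x assume "x \<in> h ` {1..i}"
    then obtain k where k: "k \<in> {1..i}" "x = h k" by blast
    have vk: "vd k" using vd_down[OF v] k by auto
    show "x \<in> dos_starts M h 0 (h i)"
      using k vk h_nn[OF vk] h_le[OF v, of k] unfolding dos_starts_def by auto
  qed
  have inj: "inj_on h {1..i}"
  proof (rule inj_onI)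
    fix p q assume pq: "p \<in> {1..i}" "q \<in> {1..i}" "h p = h q"
    show "p = q"
    proof (rule ccontr)
      assume "p \<noteq> q"
      then consider "p < q" | "q < p" by linarith
      then show False
      proof cases
        case 1 then show False using h_lt[of q p] vd_down[OF v, of q] pq by auto
      next
        case 2 then show False using h_lt[of p q] vd_down[OF v, of p] pq by auto
      qed
    qed
  qed
  have "i = card (h ` {1..i})" using card_image[OF inj] by simp
  also have "\<dots> \<le> card (dos_starts M h 0 (h i))"
    by (rule card_mono[OF freq(1)[OF h_nn[OF v]] sub])
  finally have "real i \<le> real (card (dos_starts M h 0 (h i)))" by simp
  also have "\<dots> \<le> real \<Lambda> + F * h i" by (rule freq(2)[OF h_nn[OF v]])
  finally show ?thesis .
qed

definition G :: "nat \<Rightarrow> real" where "G p = h p - (\<Sum>k\<in>{1..<p}. tau k)"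

lemma sum_tau_Suc: "1 \<le> p \<Longrightarrow> (\<Sum>k\<in>{1..<Suc p}. tau k) = (\<Sum>k\<in>{1..<p}. tau k) + tau p"
  by (simp add: sum.atLeastLessThan_Suc)

lemma sum_before_le: "vd p \<Longrightarrow> (\<Sum>k\<in>{1..<Suc p}. tau k) \<le> measure lborel (XiI M h tau 0 (h p + tau p))"
  by (rule meas_lower) (auto intro: vd_down end_le)

lemma G_nn: "vd p \<Longrightarrow> 0 \<le> G p"
proof -
  assume v: "vd p"
  have "(\<Sum>k\<in>{1..<Suc p}. tau k) \<le> h p + tau p"
    using sum_before_le[OF v] meas_le[of "h p + tau p"] h_nn[OF v] tau_nn[OF v] by linarith
  then show ?thesis using sum_tau_Suc[OF vd_ge1[OF v]] by (simp add: G_def)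
qed

lemma G_lower: "vd p \<Longrightarrow> (1 - B) * h p - \<kappa> \<le> G p"
proof -
  assume v: "vd p"
  have "(\<Sum>k\<in>{1..<p}. tau k) \<le> measure lborel (XiI M h tau 0 (h p))"
    by (rule meas_lower) (auto intro: vd_down[OF v] strict[OF v, THEN less_imp_le])
  also have "\<dots> \<le> \<kappa> + B * h p" by (rule dur[OF h_nn[OF v]])
  finally show ?thesis by (simp add: G_def algebra_simps)
qed

lemma G_Suc: "vd (Suc n) \<Longrightarrow> 1 \<le> n \<Longrightarrow> G n \<le> G (Suc n)"
proof -
  assume v: "vd (Suc n)" "1 \<le> n"
  have vn: "vd n" using vd_down[OF v(1), of n] v(2) by simp
  have "h n + tau n < h (Suc n)" by (rule step_lt[OF vn v(1)])
  then show ?thesis using sum_tau_Suc[OF v(2)] by (simp add: G_def)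
qed

lemma G_mono: "vd q \<Longrightarrow> 1 \<le> p \<Longrightarrow> p \<le> q \<Longrightarrow> G p \<le> G q"
proof (induction q)
  case 0 then show ?case by simp
next
  case (Suc q)
  show ?case
  proof (cases "p = Suc q")
    case True then show ?thesis by simp
  next
    case False
    then have "p \<le> q" using Suc.prems by simp
    moreover have "vd q" using vd_down[OF Suc.prems(1), of q] Suc.prems \<open>p \<le> q\<close> by simp
    ultimately have "G p \<le> G q" using Suc by simp
    also have "G q \<le> G (Suc q)" using G_Suc[OF Suc.prems(1)] Suc.prems \<open>p \<le> q\<close> by simp
    finally show ?thesis .
  qed
qed

lemma G_diff: "vd j \<Longrightarrow> 1 \<le> m \<Longrightarrow> m \<le> j \<Longrightarrow> G j - G m \<le> h j - h m"
proof -
  assume v: "vd j" "1 \<le> m" "m \<le> j"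
  have "(\<Sum>k\<in>{1..<m}. tau k) + (\<Sum>k\<in>{m..<j}. tau k) = (\<Sum>k\<in>{1..<j}. tau k)"
    using v by (intro sum.atLeastLessThan_concat) auto
  moreover have "0 \<le> (\<Sum>k\<in>{m..<j}. tau k)"
    using v by (intro sum_nonneg tau_nn vd_down[OF v(1)]) auto
  ultimately show ?thesis by (simp add: G_def)
qed

lemma G_diff2: "vd j \<Longrightarrow> 1 \<le> m \<Longrightarrow> m < j \<Longrightarrow> G j - G m \<le> h j - (h m + tau m)"
proof -
  assume v: "vd j" "1 \<le> m" "m < j"
  have "(\<Sum>k\<in>{1..<m}. tau k) + (\<Sum>k\<in>{m..<j}. tau k) = (\<Sum>k\<in>{1..<j}. tau k)"
    using v by (intro sum.atLeastLessThan_concat) auto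
  moreover have "(\<Sum>k\<in>{m..<j}. tau k) = tau m + (\<Sum>k\<in>{Suc m..<j}. tau k)"
    using v by (simp add: sum.atLeast_Suc_lessThan)
  moreover have "0 \<le> (\<Sum>k\<in>{Suc m..<j}. tau k)"
    using v by (intro sum_nonneg tau_nn vd_down[OF v(1)]) auto
  ultimately show ?thesis by (simp add: G_def)
qed

lemma one_minus_Bd: 
  assumes "vd p" "2 \<le> p"
  shows "1 - Bd_i M h tau p \<le> G p / (h p + tau p)"
proof -
  define T where "T = h p + tau p"
  have T: "0 < T" using h_pos[OF assms] tau_nn[OF assms(1)] by (simp add: T_def)
  have "(\<Sum>k\<in>{1..<p}. tau k) + tau p \<le> measure lborel (XiI M h tau 0 T)"
    using sum_before_le[OF assms(1)] sum_tau_Suc[of p] assms(2) by (simp add: T_def)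
  then have "T - measure lborel (XiI M h tau 0 T) \<le> G p" by (simp add: G_def T_def)
  then have "(T - measure lborel (XiI M h tau 0 T)) / T \<le> G p / T" using T
    by (simp add: divide_right_mono)
  moreover have "(T - measure lborel (XiI M h tau 0 T)) / T = 1 - Bd_i M h tau p"
    using T by (simp add: Bd_i_def T_def[symmetric] diff_divide_distrib)
  ultimately show ?thesis by (simp add: T_def)
qed


lemma bd_unif: "\<exists>bd<1. \<forall>i. vd i \<and> 2 \<le> i \<longrightarrow> Bd_i M h tau i \<le> bd"
proof -
  define T0 where "T0 = 2 * \<kappa> / (1 - B)"
  have T0: "0 < T0" using B by (simp add: T0_def)
  define I0 where "I0 = {i. vd i \<and> 2 \<le> i \<and> real i \<le> real \<Lambda> + F * T0}"
  have "I0 \<subseteq> {..nat \<lceil>real \<Lambda> + F * T0\<rceil>}" unfolding I0_def by (auto simp: le_nat_iff) (metis ceiling_mono ceiling_of_nat)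
  then have finI0: "finite I0" by (rule finite_subset) simp
  define bd where "bd = Max (insert ((1 + B) / 2) (Bd_i M h tau ` I0))"
  have fin: "finite (insert ((1 + B) / 2) (Bd_i M h tau ` I0))" using finI0 by simp
  have "bd \<in> insert ((1 + B) / 2) (Bd_i M h tau ` I0)" unfolding bd_def by (rule Max_in[OF fin]) simp
  then have "bd < 1" using B Bd_lt1 by (auto simp: I0_def)
  moreover have "Bd_i M h tau i \<le> bd" if i: "vd i" "2 \<le> i" for i
  proof (cases "T0 \<le> h i + tau i")
    case True
    define T where "T = h i + tau i"
    have Tp: "0 < T" using T0 True by (simp add: T_def)
    have "Bd_i M h tau i = measure lborel (XiI M h tau 0 T) / T" by (simp add: Bd_i_def T_def)
    also have "\<dots> \<le> (\<kappa> + B * T) / T" using dur[of T] Tp by (simp add: divide_right_mono)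
    also have "\<dots> = \<kappa> / T + B" using Tp by (simp add: field_simps)
    also have "\<kappa> / T \<le> \<kappa> / T0" using True B T0 by (simp add: T_def frac_le)
    also have "\<kappa> / T0 = (1 - B) / 2" using B by (simp add: T0_def field_simps)
    finally have "Bd_i M h tau i \<le> (1 - B) / 2 + B" by simp
    also have "(1 - B) / 2 + B = (1 + B) / 2" by (simp add: field_simps)
    also have "\<dots> \<le> bd" unfolding bd_def using fin by (rule Max_ge) simp
    finally show ?thesis .
  next
    case False
    then have "h i < T0" using tau_nn[OF i(1)] by simp
    then have "F * h i \<le> F * T0" using F by (simp add: mult_left_mono)
    then have "i \<in> I0" using count_bound[OF i(1)] i by (simp add: I0_def)
    then show ?thesis unfolding bd_def using fin by (intro Max_ge) auto
  qed
  ultimately show ?thesis by blast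
qed

lemma bf_unif: "\<exists>bf. \<forall>i. vd i \<and> 2 \<le> i \<longrightarrow> Bf_i h i \<le> bf"
proof (cases "vd 2")
  case False
  then have "\<not> (vd i \<and> 2 \<le> i)" for i using vd_down[of i 2] by auto
  then show ?thesis by blast
next
  case True
  have h2: "0 < h 2" using h_pos[OF True] by simp
  have "Bf_i h i \<le> real \<Lambda> / h 2 + F" if i: "vd i" "2 \<le> i" for i
  proof -
    have hi: "h 2 \<le> h i" using h_le[OF i(1), of 2] i by simp
    have hp: "0 < h i" using h2 hi by simp
    have "Bf_i h i = real i / h i" by (simp add: Bf_i_def)
    also have "\<dots> \<le> (real \<Lambda> + F * h i) / h i" using count_bound[OF i(1)] hp by (simp add: divide_right_mono)
    also have "\<dots> = real \<Lambda> / h i + F" using hp by (simp add: field_simps)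
    also have "real \<Lambda> / h i \<le> real \<Lambda> / h 2" using hi h2 by (simp add: frac_le)
    finally show ?thesis by simp
  qed
  then show ?thesis by blast
qed

lemma step_lower:
  assumes e0: "0 < e0" "e0 < 1" and th: "0 < th" "th < 1" and g1: "0 < g1" and D0: "0 < D0"
    and ell: "2 \<le> ell"
  shows "\<exists>Dl>0. \<forall>s. Dl \<le> sample_step M h tau ell e0 th D0 g1 s"
proof -
  obtain bd where bd: "bd < 1" "\<And>i. vd i \<Longrightarrow> 2 \<le> i \<Longrightarrow> Bd_i M h tau i \<le> bd" using bd_unif by blast
  obtain bf where bf: "\<And>i. vd i \<Longrightarrow> 2 \<le> i \<Longrightarrow> Bf_i h i \<le> bf" using bf_unif by blast
  define U where "U = max e0 (th * bd + (1 - th))"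
  define V where "V = max e0 (bf / th)"
  have U1: "U < 1" using e0 th bd(1) by (simp add: U_def)
  have V0: "0 < V" using e0 by (simp add: V_def)
  have BdU: "Bd_hat M h tau ell e0 th s' \<le> U" for s'
  proof (rule Bd_hat_le)
    show "e0 \<le> U" by (simp add: U_def)
    show "th * Bd_i M h tau i + (1 - th) \<le> U" if "vd i" "ell \<le> i" for i
    proof -
      have "th * Bd_i M h tau i \<le> th * bd" using bd(2)[of i] that ell th by (simp add: mult_left_mono)
      then show ?thesis by (simp add: U_def)
    qed
  qed (use ell in simp)
  have BfV: "Bf_hat M h ell e0 th s' \<le> V" for s'
  proof (rule Bf_hat_le)
    show "e0 \<le> V" by (simp add: V_def)
    show "Bf_i h i / th \<le> V" if "vd i" "ell \<le> i" for i
    proof -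
      have "Bf_i h i / th \<le> bf / th" using bf[of i] that ell th by (simp add: divide_right_mono)
      then show ?thesis by (simp add: V_def)
    qed
  qed (use ell in simp)
  define Dl where "Dl = min D0 ((1 - U) / (g1 * V))"
  have Dl0: "0 < Dl" using D0 U1 V0 g1 by (simp add: Dl_def)
  have "Dl \<le> sample_step M h tau ell e0 th D0 g1 s" for s
  proof (cases "\<exists>n. phase_d M h tau n s")
    case True
    then obtain n where n: "phase_d M h tau n s" by blast
    let ?a = "Bd_hat M h tau ell e0 th (h n + tau n)"
    let ?b = "Bf_hat M h ell e0 th (h n)"
    have "(1 - U) / (g1 * V) \<le> (1 - ?a) / (g1 * ?b)"
    proof (rule frac_le)
      show "0 \<le> 1 - ?a" using BdU[of "h n + tau n"] U1 by simp
      show "1 - U \<le> 1 - ?a" using BdU[of "h n + tau n"] by simp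
      show "0 < g1 * ?b" using g1 Bf_hat_ge[of e0 ell th "h n"] e0 by simp
      show "g1 * ?b \<le> g1 * V" using g1 BfV[of "h n"] by simp
    qed
    then show ?thesis using step_eq[OF n] by (simp add: Dl_def)
  next
    case False
    then show ?thesis using step_eq0[OF False] by (simp add: Dl_def)
  qed
  then show ?thesis using Dl0 by blast
qed

lemma step_upper:
  assumes e0: "0 < e0" and th: "0 < th" "th < 1" and g1: "0 < g1"
    and ell: "2 \<le> ell" and p: "vd p" "ell \<le> p" and ph: "phase_d M h tau p s"
  shows "sample_step M h tau ell e0 th D0 g1 s \<le> th * th / g1 * (G p / real p)"
proof -
  let ?a = "Bd_hat M h tau ell e0 th (h p + tau p)"
  let ?b = "Bf_hat M h ell e0 th (h p)"
  define T where "T = h p + tau p"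
  have p2: "2 \<le> p" using ell p by simp
  have hp: "0 < h p" using h_pos[OF p(1) p2] .
  have T: "0 < T" "h p \<le> T" using hp tau_nn[OF p(1)] by (auto simp: T_def)
  have Gn: "0 \<le> G p" using G_nn[OF p(1)] .
  have pp: "0 < real p" using p2 by simp
  have "th * Bd_i M h tau p + (1 - th) \<le> ?a" by (rule Bd_hat_ge_i[OF p])
  then have "1 - ?a \<le> th * (1 - Bd_i M h tau p)" by (simp add: algebra_simps)
  also have "\<dots> \<le> th * (G p / T)" using mult_left_mono[OF one_minus_Bd[OF p(1) p2], of th] th by (simp add: T_def)
  finally have num: "1 - ?a \<le> th * (G p / T)" .
  have "Bf_i h p / th \<le> ?b" by (rule Bf_hat_ge_i[OF p])
  then have den: "real p / (th * h p) \<le> ?b" by (simp add: Bf_i_def mult.commute)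
  have w0: "0 < g1 * (real p / (th * h p))" using g1 pp th hp by simp
  have "sample_step M h tau ell e0 th D0 g1 s \<le> (1 - ?a) / (g1 * ?b)"
    using step_eq[OF ph] by simp
  also have "\<dots> \<le> (th * (G p / T)) / (g1 * (real p / (th * h p)))"
  proof (rule frac_le)
    show "0 \<le> th * (G p / T)" using th Gn T by simp
    show "1 - ?a \<le> th * (G p / T)" by (rule num)
    show "0 < g1 * (real p / (th * h p))" by (rule w0)
    show "g1 * (real p / (th * h p)) \<le> g1 * ?b" using mult_left_mono[OF den, of g1] g1 by simp
  qed
  also have "\<dots> = th * th / g1 * (G p / real p) * (h p / T)"
    using th g1 pp hp T by (simp add: field_simps)
  also have "\<dots> \<le> th * th / g1 * (G p / real p) * 1"
    using T th g1 Gn pp by (intro mult_left_mono) (auto simp: divide_le_eq)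
  finally show ?thesis by simp
qed

lemma infinitely_good:
  assumes e0: "0 < e0" and th: "0 < th" "th < 1" and g1: "1 < g1" and ell: "2 \<le> ell"
    and Dl: "0 < Dl" "\<And>s. Dl \<le> sample_step M h tau ell e0 th D0 g1 s"
    and tstep: "\<And>k. 1 \<le> k \<Longrightarrow> t (Suc k) = t k + sample_step M h tau ell e0 th D0 g1 (t k)"
  shows "\<exists>k\<ge>K. t k \<notin> dos_attack_set M h tau"
proof (rule ccontr)
  let ?st = "sample_step M h tau ell e0 th D0 g1"
  assume "\<not> ?thesis"
  then have att: "\<And>k. K \<le> k \<Longrightarrow> t k \<in> dos_attack_set M h tau" by auto
  have inc: "\<And>k. 1 \<le> k \<Longrightarrow> t k + Dl \<le> t (Suc k)" using tstep Dl by simp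
  have mono: "t k \<le> t k'" if "1 \<le> k" "k \<le> k'" for k k'
    by (rule seq_mono[where t=t and Dl=Dl]) (use inc Dl that in auto)
  have unb: "\<exists>k\<ge>K0. X < t k" for K0 X
    by (rule seq_unb[where t=t and Dl=Dl]) (use inc Dl in auto)
  define K1 where "K1 = max K 1"
  have att1: "\<And>k. K1 \<le> k \<Longrightarrow> t k \<in> dos_attack_set M h tau" using att by (simp add: K1_def)
  have K11: "1 \<le> K1" by (simp add: K1_def)
  show False
  proof (cases M)
    case (enat N)
    obtain k where k: "k \<ge> K1" "h N + tau N < t k" using unb by blast
    obtain n where n: "vd n" "t k \<le> h n + tau n" using att1[OF k(1)] by (rule attack_mem) auto
    have vN: "vd N" using n(1) enat by (simp add: dos_idx_def)
    have "n \<le> N" using n(1) enat by (simp add: dos_idx_def)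
    then have "h n + tau n \<le> h N + tau N" using end_le[OF vN, of n] vd_ge1[OF n(1)] by simp
    then show False using n k by simp
  next
    case infinity
    then have allv: "\<And>n. 1 \<le> n \<Longrightarrow> vd n" by (simp add: dos_idx_def)
    obtain K' where K': "K' \<ge> K1" "h (ell + 1) < t K'" using unb by blast
    have K'1: "1 \<le> K'" using K' K11 by simp
    obtain m0 where m0: "vd m0" "h m0 \<le> t K'" "t K' \<le> h m0 + tau m0"
      using att1[OF K'(1)] by (rule attack_mem) auto
    have m0ge: "ell + 1 \<le> m0"
    proof (rule ccontr)
      assume "\<not> ell + 1 \<le> m0"
      then have "h m0 + tau m0 < h (ell + 1)" using strict[OF allv[of "ell + 1"], of m0] vd_ge1[OF m0(1)] by simp
      then show False using m0 K' by simp
    qed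
    define c where "c = th * th / g1"
    have c: "0 \<le> c" "c < 1"
    proof -
      show "0 \<le> c" using th g1 by (simp add: c_def)
      have "th * th < 1" using th by (metis mult_strict_mono' mult_1_right less_eq_real_def)
      then show "c < 1" using g1 by (simp add: c_def divide_less_eq)
    qed
    have C: "\<exists>m. m0 \<le> m \<and> m \<le> j \<and> G (Suc j) \<le> G m * (1 + c / (real m - 1))" if j: "m0 \<le> j" for j
    proof -
      have vj: "vd j" using allv j vd_ge1[OF m0(1)] by simp
      define X where "X = h j + tau j"
      have "h m0 + tau m0 \<le> X" using end_le[OF vj, of m0] vd_ge1[OF m0(1)] j by (simp add: X_def)
      then have "t K' \<le> X" using m0(3) by linarith
      then obtain k where k: "k \<ge> K'" "t k \<le> X" "X < t (Suc k)" using seq_last[OF unb] by blast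
      have k1: "1 \<le> k" "K1 \<le> k" using k K' K11 by auto
      obtain m where m: "vd m" "h m \<le> t k" "t k \<le> h m + tau m"
        using att1[OF k1(2)] by (rule attack_mem) auto
      obtain m' where m': "vd m'" "h m' \<le> t (Suc k)" "t (Suc k) \<le> h m' + tau m'"
        using att1[of "Suc k"] k1 by (auto elim: attack_mem)
      have "j < m'"
      proof (rule ccontr)
        assume "\<not> j < m'"
        then have "h m' + tau m' \<le> X" using end_le[OF vj, of m'] vd_ge1[OF m'(1)] by (simp add: X_def)
        then show False using m' k by simp
      qed
      then have hS: "h (Suc j) \<le> t (Suc k)" using h_le[OF m'(1), of "Suc j"] m'(2) by simp
      have mj: "m \<le> j"
      proof (rule ccontr)
        assume "\<not> m \<le> j"
        then have "h j + tau j < h m" using strict[OF m(1), of j] vd_ge1[OF vj] by simp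
        then show False using m k by (simp add: X_def)
      qed
      have mm0: "m0 \<le> m"
      proof (rule ccontr)
        assume "\<not> m0 \<le> m"
        then have "h m + tau m < h m0" using strict[OF m0(1), of m] vd_ge1[OF m(1)] by simp
        moreover have "t K' \<le> t k" using mono[OF K'1 k(1)] .
        ultimately show False using m m0 by simp
      qed
      have m3: "ell + 1 \<le> m" using m0ge mm0 by simp
      obtain p where p: "phase_d M h tau p (t k)" "m - 1 \<le> p" "p \<le> m" "ell \<le> p" "vd p"
      proof (cases "h m + tau m \<le> t k")
        case True
        have "phase_d M h tau m (t k)" unfolding phase_d_def
        proof (intro conjI impI)
          show "vd m" "h m + tau m \<le> t k" by (fact m(1), fact True)
          assume vs: "vd (Suc m)"
          have "h m + tau m < h (Suc m)" by (rule step_lt[OF m(1) vs])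
          then show "t k < h (Suc m) + tau (Suc m)" using m(3) tau_nn[OF vs] by simp
        qed
        then show ?thesis using that[of m] m3 m(1) by simp
      next
        case False
        have vm1: "vd (m - 1)" using allv[of "m - 1"] m3 ell by simp
        have sm: "Suc (m - 1) = m" using m3 by simp
        have "h (m - 1) + tau (m - 1) < h m" using step_lt[OF vm1] sm m(1) by metis
        then have "phase_d M h tau (m - 1) (t k)" unfolding phase_d_def
          using vm1 sm False m(2) by simp
        then show ?thesis using that[of "m - 1"] m3 vm1 by simp
      qed
      have "?st (t k) \<le> th * th / g1 * (G p / real p)"
        by (rule step_upper[OF e0 th _ ell p(5) p(4) p(1)]) (use g1 in simp)
      also have "G p / real p \<le> G m / (real m - 1)"
      proof (rule frac_le)
        show "0 \<le> G m" by (rule G_nn[OF m(1)])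
        show "G p \<le> G m" using G_mono[OF m(1), of p] p ell by simp
        show "0 < real m - 1" using m3 ell by simp
        show "real m - 1 \<le> real p" using p(2) m3 by linarith
      qed
      then have "th * th / g1 * (G p / real p) \<le> c * (G m / (real m - 1))"
        using mult_left_mono[OF _ c(1)] unfolding c_def by blast
      finally have st: "?st (t k) \<le> c * (G m / (real m - 1))" .
      have "G (Suc j) - G m \<le> h (Suc j) - (h m + tau m)" using G_diff2[OF allv[of "Suc j"], of m] vd_ge1[OF m(1)] mj by simp
      also have "\<dots> \<le> t (Suc k) - t k" using hS m(3) by simp
      also have "\<dots> = ?st (t k)" using tstep[OF k1(1)] by simp
      finally have "G (Suc j) \<le> G m + c * (G m / (real m - 1))" using st by simp
      also have "\<dots> = G m * (1 + c / (real m - 1))" by (simp add: algebra_simps)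
      finally show ?thesis using mm0 mj by blast
    qed
    have m02: "1 \<le> real m0 - 2" using m0ge ell by simp
    define A where "A = G m0 / (real m0 - 2) powr c"
    have A0: "0 \<le> A" using G_nn[OF m0(1)] m02 by (simp add: A_def)
    have D: "G j \<le> A * (real j - 2) powr c" if "m0 \<le> j" for j
      using that
    proof (induction j rule: less_induct)
      case (less j)
      show ?case
      proof (cases "j = m0")
        case True
        have "0 < (real m0 - 2) powr c" using m02 by simp
        then show ?thesis using True by (simp add: A_def)
      next
        case False
        then obtain j' where j': "j = Suc j'" "m0 \<le> j'" using less.prems by (cases j) auto
        obtain m where m: "m0 \<le> m" "m \<le> j'" "G j \<le> G m * (1 + c / (real m - 1))"
          using C[OF j'(2)] j'(1) by auto
        have IH: "G m \<le> A * (real m - 2) powr c" using less.IH[of m] m j' by simp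
        have pos: "0 \<le> 1 + c / (real m - 1)" using c m m02 by simp
        have "G m * (1 + c / (real m - 1)) \<le> A * (real m - 2) powr c * (1 + c / (real m - 1))"
          by (rule mult_right_mono[OF IH pos])
        also have "\<dots> = A * ((real m - 2) powr c * (1 + c / ((real m - 2) + 1)))"
          by (simp add: algebra_simps)
        also have "\<dots> \<le> A * ((real m - 2) + 1) powr c"
          using key_ineq[of "real m - 2" c] m m02 c A0 by (intro mult_left_mono) auto
        also have "\<dots> \<le> A * (real j - 2) powr c"
          using m j' m02 c A0 by (intro mult_left_mono powr_mono2) auto
        finally show ?thesis using m(3) by simp
      qed
    qed
    define \<alpha> where "\<alpha> = (1 - B) / (F + 1)"
    define \<beta> where "\<beta> = (1 - B) * real \<Lambda> / (F + 1) + \<kappa>"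
    have \<alpha>: "0 < \<alpha>" using B F by (simp add: \<alpha>_def)
    have E: "\<alpha> * real j - \<beta> \<le> A * real j powr c" if "m0 \<le> j" for j
    proof -
      have vj: "vd j" using allv that vd_ge1[OF m0(1)] by simp
      have "real j \<le> real \<Lambda> + F * h j" by (rule count_bound[OF vj])
      also have "\<dots> \<le> real \<Lambda> + (F + 1) * h j" using h_nn[OF vj] by (simp add: algebra_simps)
      finally have "(real j - real \<Lambda>) / (F + 1) \<le> h j" using F by (simp add: divide_le_eq mult.commute)
      then have "(1 - B) * ((real j - real \<Lambda>) / (F + 1)) \<le> (1 - B) * h j"
        using B by (intro mult_left_mono) auto
      moreover have "\<alpha> * real j - \<beta> = (1 - B) * ((real j - real \<Lambda>) / (F + 1)) - \<kappa>"
        by (simp add: \<alpha>_def \<beta>_def diff_divide_distrib right_diff_distrib mult.commute)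
      ultimately have "\<alpha> * real j - \<beta> \<le> (1 - B) * h j - \<kappa>" by simp
      also have "\<dots> \<le> G j" by (rule G_lower[OF vj])
      also have "\<dots> \<le> A * (real j - 2) powr c" by (rule D[OF that])
      also have "\<dots> \<le> A * real j powr c"
        using m02 that c A0 by (intro mult_left_mono powr_mono2) auto
      finally show ?thesis .
    qed
    show False by (rule growth_contra[OF \<alpha> c A0 E])
  qed
qed
end


lemma conv_bound:
  fixes a u d D R :: real
  assumes "0 \<le> d" "d \<le> D" "\<bar>a\<bar> \<le> R" "\<bar>a + u * D\<bar> \<le> R"
  shows "\<bar>a + u * d\<bar> \<le> R"
proof (cases "0 \<le> u")
  case True
  then have "u * d \<le> u * D" "0 \<le> u * d" using assms by (auto intro: mult_left_mono)
  then show ?thesis using assms by linarith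
next
  case False
  then have "u * D \<le> u * d" "u * d \<le> 0" using assms
    by (auto intro: mult_left_mono_neg simp: mult_nonpos_nonneg)
  then show ?thesis using assms by linarith
qed

lemma step_le_D0: "sample_step M h tau ell e0 th D0 g1 s \<le> D0"
  unfolding sample_step_def by (auto simp: Let_def)

theorem theorem3:
  fixes a :: "'n::finite \<Rightarrow> 'n \<Rightarrow> real"
    and M :: enat and h tau :: "nat \<Rightarrow> real"
    and ell :: nat and \<epsilon>0 \<theta> \<Delta>0 \<gamma>1 :: real
    and t :: "nat \<Rightarrow> real"
    and x :: "'n \<Rightarrow> real \<Rightarrow> real"
  assumes adj: "\<forall>i j. a i j \<in> {0, 1}"
    and sym: "transpose (laplacian a) = laplacian a"
    and irr: "irreducible_mat (laplacian a)"
    and dos: "dos_seq M h tau"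
    and not_edge: "\<not> edge_case M h tau"
    and ell_ge: "2 \<le> ell"
    and eps: "0 < \<epsilon>0" "\<epsilon>0 < 1"
    and theta: "0 < \<theta>" "\<theta> < 1"
    and D0: "0 < \<Delta>0" "\<bar>1 - \<Delta>0 * lambda_max (laplacian a)\<bar> < 1"
    and gam: "1 < \<gamma>1"
    and t1: "t 1 = 0"
    and tstep: "\<forall>k\<ge>1. t (Suc k) = t k + sample_step M h tau ell \<epsilon>0 \<theta> \<Delta>0 \<gamma>1 (t k)"
    and xcont: "\<forall>i. continuous_on {0..} (x i)"
    and xdyn: "\<forall>k\<ge>1. \<forall>i. \<forall>s\<in>{t k<..<t (Suc k)}.
       (x i has_real_derivative
          (if t k \<in> dos_attack_set M h tau then 0
           else (\<Sum>j\<in>UNIV. a i j * (x j (t k) - x i (t k))))) (at s)"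
  shows "(\<forall>i. ((\<lambda>s. x i s - (\<Sum>j\<in>UNIV. x j 0) / real CARD('n)) \<longlongrightarrow> 0) at_top)
       \<and> (\<exists>\<Delta>l>0. \<forall>k\<ge>1. \<Delta>l \<le> sample_step M h tau ell \<epsilon>0 \<theta> \<Delta>0 \<gamma>1 (t k))"
proof -
  interpret dosl M h tau by (rule dosl.intro[OF dos])
  obtain B \<kappa> F \<Lambda> where cst: "0 \<le> B" "B < 1" "0 < \<kappa>"
     "\<forall>t\<ge>0. measure lborel (XiI M h tau 0 t) \<le> \<kappa> + B * t" "0 \<le> F"
     "\<forall>t\<ge>0. finite (dos_starts M h 0 t) \<and> real (card (dos_starts M h 0 t)) \<le> real \<Lambda> + F * t"
    using ne_consts[OF not_edge] by blast
  interpret dosb M h tau B \<kappa> F \<Lambda>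
    by (unfold_locales) (use cst in auto)
  let ?st = "sample_step M h tau ell \<epsilon>0 \<theta> \<Delta>0 \<gamma>1"
  let ?att = "dos_attack_set M h tau"
  obtain Dl where Dl: "0 < Dl" "\<And>s. Dl \<le> ?st s"
  proof -
    have "0 < \<gamma>1" using gam by simp
    from step_lower[OF eps theta this D0(1) ell_ge] show ?thesis using that by blast
  qed
  have part2: "\<exists>\<Delta>l>0. \<forall>k\<ge>1. \<Delta>l \<le> ?st (t k)" using Dl by blast
  have ts: "\<And>k. 1 \<le> k \<Longrightarrow> t (Suc k) = t k + ?st (t k)" using tstep by simp
  have inc: "\<And>k. 1 \<le> k \<Longrightarrow> t k + Dl \<le> t (Suc k)" using ts Dl by simp
  have tmono: "t k \<le> t k'" if "1 \<le> k" "k \<le> k'" for k k'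
    by (rule seq_mono[where t=t and Dl=Dl]) (use inc Dl that in auto)
  have unb: "\<exists>k\<ge>K0. X < t k" for K0 X
    by (rule seq_unb[where t=t and Dl=Dl]) (use inc Dl in auto)
  have tnn: "0 \<le> t k" if "1 \<le> k" for k using tmono[OF _ that] t1 by simp
  have tlt: "t k < t (Suc k)" if "1 \<le> k" for k using inc[OF that] Dl by simp
  let ?L = "laplacian a"
  define X where "X k = (\<chi> i. x i (t k))" for k
  define one :: "real^'n" where "one = (\<chi> i. 1)"
  define avg where "avg = (\<Sum>j\<in>UNIV. x j 0) / real CARD('n)"
  define e where "e k = X k - avg *\<^sub>R one" for k
  define u where "u k i = (if t k \<in> ?att then 0 else (\<Sum>j\<in>UNIV. a i j * (x j (t k) - x i (t k))))" for k i
  have interp: "x i s = x i (t k) + u k i * (s - t k)" if k: "1 \<le> k" and s: "s \<in> {t k..t (Suc k)}" for i k s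
  proof (rule lin_interp[OF tlt[OF k] _ _ s])
    show "continuous_on {t k..t (Suc k)} (x i)"
      using xcont tnn[OF k] by (auto intro: continuous_on_subset)
    show "(x i has_real_derivative u k i) (at s')" if "s' \<in> {t k<..<t (Suc k)}" for s'
      using xdyn k that unfolding u_def by blast
  qed
  have uform: "(\<Sum>j\<in>UNIV. a i j * (v $ j - v $ i)) = - ((?L *v v) $ i)" for v :: "real^'n" and i
  proof -
    have "(\<Sum>j\<in>UNIV. a i j * (v $ j - v $ i)) = (\<Sum>j\<in>UNIV. bb a i j * (v $ j - v $ i))"
      by (intro sum.cong) (auto simp: bb_def)
    also have "\<dots> = - (\<Sum>j\<in>UNIV. bb a i j * (v $ i - v $ j))"
      by (simp add: sum_negf[symmetric] algebra_simps)
    finally show ?thesis by (simp add: lap_apply)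
  qed
  have Lone: "?L *v one = 0" unfolding one_def by (rule lap_one)
  have Le: "?L *v e k = ?L *v X k" for k
    by (simp add: e_def matrix_vector_mult_diff_distrib matrix_vector_mult_scaleR Lone)
  have ucomp: "u k i = (if t k \<in> ?att then 0 else - ((?L *v e k) $ i))" for k i
    using uform[of i "X k"] by (simp add: u_def Le X_def)
  have ecomp: "e k $ i = x i (t k) - avg" for k i by (simp add: e_def X_def one_def)
  have estepc: "e (Suc k) $ i = e k $ i + u k i * ?st (t k)" if "1 \<le> k" for k i
    using interp[OF that, of "t (Suc k)" i] tlt[OF that] ts[OF that] by (simp add: ecomp)
  have estep: "e (Suc k) = (if t k \<in> ?att then e k else e k - ?st (t k) *\<^sub>R (?L *v e k))" if "1 \<le> k" for k
    by (simp add: vec_eq_iff estepc[OF that] ucomp)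
  have sume: "(\<Sum>i\<in>UNIV. e k $ i) = 0" if "1 \<le> k" for k
    using that
  proof (induction k rule: dec_induct)
    case base
    have "(\<Sum>i\<in>UNIV. e 1 $ i) = (\<Sum>i\<in>UNIV. x i 0) - real CARD('n) * avg"
      using t1 by (simp add: ecomp sum_subtractf)
    then show ?case by (simp add: avg_def)
  next
    case (step k)
    have "(\<Sum>i\<in>UNIV. (?L *v e k) $ i) = 0" by (rule lap_sum_zero[OF sym])
    show ?case
    proof (cases "t k \<in> ?att")
      case True then show ?thesis using step estep[of k] by simp
    next
      case False
      then have "e (Suc k) = e k - ?st (t k) *\<^sub>R (?L *v e k)" using estep[of k] step by simp
      then have "(\<Sum>i\<in>UNIV. e (Suc k) $ i) = (\<Sum>i\<in>UNIV. e k $ i) - ?st (t k) * (\<Sum>i\<in>UNIV. (?L *v e k) $ i)"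
        by (simp add: sum_subtractf sum_distrib_left)
      then show ?thesis using step \<open>(\<Sum>i\<in>UNIV. (?L *v e k) $ i) = 0\<close> by simp
    qed
  qed
  have psd: "\<And>z. 0 \<le> z \<bullet> (?L *v z)" by (rule lap_psd[OF adj sym])
  have one0: "one \<noteq> 0" by (simp add: one_def vec_eq_iff)
  have ne: "\<exists>v. v \<noteq> 0 \<and> ?L *v v = 0 *\<^sub>R v" using one0 Lone by auto
  have lam0: "0 \<le> lambda_max ?L" using lam_max_facts(2)[OF sym ne one0] Lone by simp
  have D0lam: "\<Delta>0 * lambda_max ?L < 2" using D0(2) by linarith
  obtain c where c: "c > 0" "\<And>v. (\<Sum>i\<in>UNIV. v $ i) = 0 \<Longrightarrow> c * (v \<bullet> v) \<le> v \<bullet> (?L *v v)"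
    using lap_coercive[OF adj sym irr] by blast
  define r where "r = max 0 (1 - Dl * (2 - \<Delta>0 * lambda_max ?L) * c)"
  have r: "0 \<le> r" "r < 1"
  proof -
    show "0 \<le> r" by (simp add: r_def)
    have "0 < Dl * (2 - \<Delta>0 * lambda_max ?L) * c" using Dl(1) D0lam c(1) by simp
    then show "r < 1" by (simp add: r_def)
  qed
  define ee where "ee k = e k \<bullet> e k" for k
  have ee0: "0 \<le> ee k" for k by (simp add: ee_def)
  have good: "ee (Suc k) \<le> r * ee k" if "1 \<le> k" "t k \<notin> ?att" for k
  proof -
    have "ee (Suc k) = (e k - ?st (t k) *\<^sub>R (?L *v e k)) \<bullet> (e k - ?st (t k) *\<^sub>R (?L *v e k))"
      using estep[OF that(1)] that(2) by (simp add: ee_def)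
    also have "\<dots> \<le> (1 - Dl * (2 - \<Delta>0 * lambda_max ?L) * c) * (e k \<bullet> e k)"
      by (rule contraction[OF sym psd ne lam0 D0lam Dl(1) Dl(2) step_le_D0 less_imp_le[OF c(1)] c(2)[OF sume[OF that(1)]]])
    also have "\<dots> \<le> r * ee k" unfolding r_def ee_def by (intro mult_right_mono) auto
    finally show ?thesis .
  qed
  have eemono: "ee (Suc k) \<le> ee k" if "1 \<le> k" for k
  proof (cases "t k \<in> ?att")
    case True then show ?thesis using estep[OF that] by (simp add: ee_def)
  next
    case False
    then have "ee (Suc k) \<le> r * ee k" using good that by blast
    also have "\<dots> \<le> 1 * ee k" using r ee0[of k] by (intro mult_right_mono) auto
    finally show ?thesis by simp
  qed
  have infgood: "\<exists>k\<ge>K. 1 \<le> k \<and> ee (Suc k) \<le> r * ee k" for K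
  proof -
    obtain k where k: "k \<ge> max K 1" "t k \<notin> ?att"
      using infinitely_good[where t=t and K="max K 1", OF eps(1) theta gam ell_ge Dl ts] by blast
    then show ?thesis using good[of k] by auto
  qed
  have eemono2: "ee k' \<le> ee k" if "1 \<le> k" "k \<le> k'" for k k'
    using that(2,1)
  proof (induction k' rule: dec_induct)
    case (step n) then show ?case using eemono[of n] by simp
  qed simp
  have comp: "\<bar>e k $ i\<bar> \<le> sqrt (ee k)" for k i
    using component_le_norm_cart[of "e k" i] by (simp add: ee_def norm_eq_sqrt_inner)
  have part1: "((\<lambda>s. x i s - (\<Sum>j\<in>UNIV. x j 0) / real CARD('n)) \<longlongrightarrow> 0) at_top" for i
    unfolding tendsto_iff eventually_at_top_linorder
  proof (intro allI impI)
    fix \<epsilon> :: real assume eps': "0 < \<epsilon>"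
    have ee2: "0 < \<epsilon> * \<epsilon>" using eps' by simp
    from decay[OF ee0 eemono infgood r ee2]
    obtain K where K: "1 \<le> K" "\<And>k. K \<le> k \<Longrightarrow> ee k < \<epsilon> * \<epsilon>" by blast
    have "\<forall>s\<ge>t K. dist (x i s - avg) 0 < \<epsilon>"
    proof (intro allI impI)
      fix s assume s: "t K \<le> s"
      obtain k where k: "k \<ge> K" "t k \<le> s" "s < t (Suc k)" using seq_last[OF unb s] by blast
      have k1: "1 \<le> k" using k K by simp
      have "x i s - avg = e k $ i + u k i * (s - t k)"
        using interp[OF k1, of s i] k by (simp add: ecomp)
      moreover have "\<bar>e k $ i + u k i * (s - t k)\<bar> \<le> sqrt (ee k)"
      proof (rule conv_bound)
        show "0 \<le> s - t k" using k by simp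
        show "s - t k \<le> ?st (t k)" using k ts[OF k1] by simp
        show "\<bar>e k $ i\<bar> \<le> sqrt (ee k)" by (rule comp)
        have "\<bar>e (Suc k) $ i\<bar> \<le> sqrt (ee (Suc k))" by (rule comp)
        also have "\<dots> \<le> sqrt (ee k)" using eemono[OF k1] by simp
        finally show "\<bar>e k $ i + u k i * ?st (t k)\<bar> \<le> sqrt (ee k)" using estepc[OF k1] by simp
      qed
      moreover have "sqrt (ee k) < \<epsilon>"
      proof -
        have "sqrt (ee k) < sqrt (\<epsilon> * \<epsilon>)" using K(2)[OF k(1)] by (subst real_sqrt_less_iff)
        then show ?thesis using eps' by simp
      qed
      ultimately show "dist (x i s - avg) 0 < \<epsilon>" by (simp add: dist_real_def)
    qed
    then show "\<exists>N. \<forall>s\<ge>N. dist (x i s - (\<Sum>j\<in>UNIV. x j 0) / real CARD('n)) 0 < \<epsilon>"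
      unfolding avg_def by blast
  qed
  show ?thesis using part1 part2 by blast
qed

end
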